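(* Let $\Omega\subset\mathbb{R}$ be an unbounded domain (open interval), $a\in C(\bar\Omega)\cap L^\infty(\Omega)$, and $K:\Omega\times\Omega\to[0,\infty)$ such that for every $x\in\Omega$ the map $K(x,\cdot)$ is measurable and for almost every $y\in\Omega$ the map $K(\cdot,y)$ is uniformly continuous. Assume further that $K$ is symmetric and $0\le K(x,y)\le C(1+|x-y|)^{-\alpha}$ for all $x,y\in\Omega$, for some $C>0$ and $\alpha>\frac32$. Let $\Omega_n:=\Omega\cap(-n,n)$. Then $$\lambda_p(\mathcal{L}_\Omega+a)\le\liminf_{n\to\infty}\lambda_v(\mathcal{L}_{\Omega_n}+a)\le\lambda_p'(\mathcal{L}_\Omega+a).$$
   Context: For $D\subset\Omega$, $\mathcal{L}_D[\varphi](x):=\int_D K(x,y)\varphi(y)\,dy$. $\lambda_p(\mathcal{L}_\Omega+a):=\sup\{\lambda:\exists\varphi\in C(\bar\Omega),\ \varphi>0,\ \mathcal{L}_\Omega[\varphi]+a\varphi+\lambda\varphi\le0\text{ in }\Omega\}$; $\lambda_p'(\mathcal{L}_\Omega+a):=\inf\{\lambda:\exists\varphi\in C(\Omega)\cap L^\infty(\Omega),\ \varphi\ge0,\ \varphi\not\equiv0,\ \mathcal{L}_\Omega[\varphi]+(a+\lambda)\varphi\ge0\text{ in }\Omega\}$; $\lambda_v(\mathcal{L}_D+a):=\inf_{\varphi\in L^2(D),\varphi\not\equiv0}-\frac{\langle\mathcal{L}_D[\varphi]+a\varphi,\varphi\rangle_{L^2(D)}}{\|\varphi\|_{L^2(D)}^2}$.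 *)

theory Defs
  imports "HOL-Analysis.Analysis"
begin

definition nlop :: "(real \<Rightarrow> real \<Rightarrow> real) \<Rightarrow> real set \<Rightarrow> (real \<Rightarrow> real) \<Rightarrow> real \<Rightarrow> real" where
  "nlop K D \<phi> x = (LINT y:D|lebesgue. K x y * \<phi> y)"

definition lambda_p :: "(real \<Rightarrow> real \<Rightarrow> real) \<Rightarrow> real set \<Rightarrow> (real \<Rightarrow> real) \<Rightarrow> ereal" where
  "lambda_p K \<Omega> a = Sup {ereal l | l. \<exists>\<phi>.
      continuous_on (closure \<Omega>) \<phi> \<and> (\<forall>x\<in>closure \<Omega>. \<phi> x > 0) \<and>
      (\<forall>x\<in>\<Omega>. set_integrable lebesgue \<Omega> (\<lambda>y. K x y * \<phi> y)) \<and>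
      (\<forall>x\<in>\<Omega>. nlop K \<Omega> \<phi> x + a x * \<phi> x + l * \<phi> x \<le> 0)}"

definition lambda_p' :: "(real \<Rightarrow> real \<Rightarrow> real) \<Rightarrow> real set \<Rightarrow> (real \<Rightarrow> real) \<Rightarrow> ereal" where
  "lambda_p' K \<Omega> a = Inf {ereal l | l. \<exists>\<phi>.
      continuous_on \<Omega> \<phi> \<and> bounded (\<phi> ` \<Omega>) \<and> (\<forall>x\<in>\<Omega>. \<phi> x \<ge> 0) \<and> (\<exists>x\<in>\<Omega>. \<phi> x \<noteq> 0) \<and>
      (\<forall>x\<in>\<Omega>. nlop K \<Omega> \<phi> x + (a x + l) * \<phi> x \<ge> 0)}"

definition lambda_v :: "(real \<Rightarrow> real \<Rightarrow> real) \<Rightarrow> real set \<Rightarrow> (real \<Rightarrow> real) \<Rightarrow> ereal" where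
  "lambda_v K D a = Inf {ereal (- (LINT x:D|lebesgue. (nlop K D \<phi> x + a x * \<phi> x) * \<phi> x)
                                 / (LINT x:D|lebesgue. (\<phi> x)\<^sup>2)) | \<phi>.
      set_borel_measurable lebesgue D \<phi> \<and> set_integrable lebesgue D (\<lambda>x. (\<phi> x)\<^sup>2) \<and>
      (LINT x:D|lebesgue. (\<phi> x)\<^sup>2) \<noteq> 0}"

end

theory Submission
  imports Defs "HOL-Analysis.Analysis" "HOL-Real_Asymp.Real_Asymp"
begin

lemma sigma_finite_lebesgue: "sigma_finite_measure (lebesgue :: real measure)"
proof -
  obtain A :: "real set set" where A: "countable A" "A \<subseteq> sets lborel" "\<Union>A = space lborel"
      "\<forall>a\<in>A. emeasure lborel a \<noteq> \<infinity>"
    using sigma_finite_measure.sigma_finite_countable[OF sigma_finite_lborel] by blast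
  show ?thesis
    apply (rule sigma_finite_measure.intro)
    apply (rule exI[of _ A])
    using A by (auto simp: subset_eq)
qed

interpretation lebSF: sigma_finite_measure "lebesgue :: real measure" by (rule sigma_finite_lebesgue)
interpretation lebP: pair_sigma_finite "lebesgue :: real measure" "lebesgue :: real measure" ..


lemma lebesgue_measurable_AE_eq:
  fixes f g :: "real \<Rightarrow> real"
  assumes N: "N \<in> null_sets lebesgue" and g: "g \<in> borel_measurable lebesgue"
    and eq: "\<And>x. x \<notin> N \<Longrightarrow> f x = g x"
  shows "f \<in> borel_measurable lebesgue"
proof (rule measurableI)
  fix A :: "real set" assume A: "A \<in> sets borel"
  have "f -` A \<inter> space lebesgue = (g -` A \<inter> space lebesgue - N) \<union> (f -` A \<inter> N)"
    using eq by auto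
  moreover have "g -` A \<inter> space lebesgue \<in> sets lebesgue" using g A by (rule measurable_sets)
  moreover have "f -` A \<inter> N \<in> null_sets lebesgue"
    using null_sets_completion_subset[of "f -` A \<inter> N" N lborel] N by auto
  ultimately show "f -` A \<inter> space lebesgue \<in> sets lebesgue"
    using N by (metis null_setsD2 sets.Diff sets.Un)
qed auto

lemma ident_lebesgue_meas[measurable]: "(\<lambda>x::real. x) \<in> borel_measurable lebesgue"
  by (rule measurable_completion) simp

lemma q_props:
  fixes c d x :: real and k :: nat
  assumes "c < d" "c < x" "x < d"
  defines "q \<equiv> \<lambda>k::nat. c + (d - c) * ((real_of_int \<lfloor>real k * ((x - c) / (d - c))\<rfloor> + 1) / (real k + 2))"
  shows "c < q k" "q k < d" "\<bar>q k - x\<bar> \<le> 2 * (d - c) / (real k + 2)"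
proof -
  define t where "t = (x - c) / (d - c)"
  have t: "0 < t" "t < 1" using assms by (auto simp: t_def field_simps)
  define s where "s = (real_of_int \<lfloor>real k * t\<rfloor> + 1) / (real k + 2)"
  have fl: "real k * t - 1 < real_of_int \<lfloor>real k * t\<rfloor>" "real_of_int \<lfloor>real k * t\<rfloor> \<le> real k * t"
    by linarith+
  have fl0: "0 \<le> real_of_int \<lfloor>real k * t\<rfloor>" using t by simp
  have s: "0 < s" "s < 1" 
  proof -
    have "0 < real_of_int \<lfloor>real k * t\<rfloor> + 1" using fl0 by linarith
    then show "0 < s" by (simp add: s_def)
    have "real k * t < real k + 1" using t
      by (metis add.commute add_strict_increasing mult.right_neutral mult_left_mono of_nat_0_le_iff zero_less_one less_eq_real_def)
    then have "real_of_int \<lfloor>real k * t\<rfloor> + 1 < real k + 2" using fl(2) by linarith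
    then show "s < 1" by (simp add: s_def)
  qed
  have st: "\<bar>s - t\<bar> \<le> 2 / (real k + 2)"
  proof -
    have "s * (real k + 2) = real_of_int \<lfloor>real k * t\<rfloor> + 1" by (simp add: s_def)
    hence "s * (real k + 2) - t * (real k + 2) = real_of_int \<lfloor>real k * t\<rfloor> + 1 - real k * t - 2 * t"
      by (simp add: algebra_simps)
    hence "\<bar>s * (real k + 2) - t * (real k + 2)\<bar> \<le> 2" using fl t by linarith
    hence "\<bar>s - t\<bar> * (real k + 2) \<le> 2" by (simp add: left_diff_distrib[symmetric] abs_mult)
    thus ?thesis by (simp add: field_simps)
  qed
  have qk: "q k = c + (d - c) * s" by (simp add: q_def s_def t_def)
  have xe: "x = c + (d - c) * t" using assms by (simp add: t_def)
  have cd: "c < d" by fact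
  have "0 < (d - c) * s" using s cd by simp
  moreover have "(d - c) * s < d - c" using s cd by simp
  ultimately show "c < q k" "q k < d" unfolding qk by linarith+
  have "\<bar>q k - x\<bar> = (d - c) * \<bar>s - t\<bar>" using cd unfolding qk xe by (simp add: abs_mult flip: right_diff_distrib)
  also have "\<dots> \<le> (d - c) * (2 / (real k + 2))" using st assms by (intro mult_left_mono) auto
  finally show "\<bar>q k - x\<bar> \<le> 2 * (d - c) / (real k + 2)" by (simp add: mult.commute)
qed


lemma Kh_measurable:
  fixes K :: "real \<Rightarrow> real \<Rightarrow> real" and c d :: real and N \<Omega> :: "real set"
  assumes cd: "c < d" "{c<..<d} \<subseteq> \<Omega>" and \<Omega>o: "open \<Omega>"
    and N: "N \<in> sets lebesgue"
    and cont: "\<And>y. y \<in> \<Omega> \<Longrightarrow> y \<notin> N \<Longrightarrow> continuous_on \<Omega> (\<lambda>x. K x y)"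
    and meas: "\<And>x. x \<in> \<Omega> \<Longrightarrow> set_borel_measurable lebesgue \<Omega> (K x)"
  shows "(\<lambda>p. indicator {c<..<d} (fst p) * indicator {c<..<d} (snd p) * indicator (-N) (fst p)
            * indicator (-N) (snd p) * K (fst p) (snd p)) \<in> borel_measurable (lebesgue \<Otimes>\<^sub>M lebesgue)"
    (is "?Kh \<in> _")
proof -
  define D where "D = {c<..<d}"
  define v where "v = (\<lambda>(k::nat) (j::int). c + (d - c) * ((real_of_int j + 1) / (real k + 2)))"
  define G where "G = (\<lambda>k j (y::real). if v k j \<in> \<Omega> then indicator \<Omega> y * K (v k j) y else 0)"
  define fl where "fl = (\<lambda>(k::nat) (x::real). \<lfloor>real k * ((x - c) / (d - c))\<rfloor>)"
  define u where "u = (\<lambda>k p. indicator D (fst p) * indicator D (snd p) * indicator (-N) (fst p)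
            * indicator (-N) (snd p) * G k (fl k (fst p)) (snd p))"
  have DN[measurable]: "D \<in> sets lebesgue" "- N \<in> sets lebesgue" using N by (auto simp: D_def Compl_in_sets_lebesgue)
  have Gm: "G k j \<in> borel_measurable lebesgue" for k j
  proof (cases "v k j \<in> \<Omega>")
    case True
    then show ?thesis using meas[OF True] by (simp add: G_def set_borel_measurable_def)
  qed (simp add: G_def)
  have flm: "(\<lambda>p. fl k (fst p)) \<in> measurable (lebesgue \<Otimes>\<^sub>M lebesgue) (count_space UNIV)" for k
    unfolding fl_def by (rule measurable_compose[OF _ measurable_real_floor]) measurable
  have um: "u k \<in> borel_measurable (lebesgue \<Otimes>\<^sub>M lebesgue)" for k
  proof -
    have "(\<lambda>p. G k (fl k (fst p)) (snd p)) \<in> borel_measurable (lebesgue \<Otimes>\<^sub>M lebesgue)"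
      by (rule measurable_compose_countable'[where I=UNIV, OF _ flm])
         (auto intro: measurable_compose[OF measurable_snd Gm])
    then show ?thesis unfolding u_def by measurable
  qed
  show ?thesis
  proof (rule borel_measurable_LIMSEQ_real[OF _ um])
    fix p :: "real \<times> real" assume "p \<in> space (lebesgue \<Otimes>\<^sub>M lebesgue)"
    obtain x y where p: "p = (x, y)" by (cases p)
    show "(\<lambda>k. u k p) \<longlonglongrightarrow> ?Kh p"
    proof (cases "x \<in> D \<and> y \<in> D \<and> x \<notin> N \<and> y \<notin> N")
      case False
      then show ?thesis by (auto simp: u_def p D_def)
    next
      case True
      define q where "q \<equiv> \<lambda>k::nat. c + (d - c) * ((real_of_int \<lfloor>real k * ((x - c) / (d - c))\<rfloor> + 1) / (real k + 2))"
      have qp: "c < q k" "q k < d" "\<bar>q k - x\<bar> \<le> 2 * (d - c) / (real k + 2)" for k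
        using q_props[of c d x k] True cd by (auto simp: q_def D_def)
      have "u k p = K (q k) y" for k
      proof -
        have "v k (fl k x) = q k" by (simp add: v_def fl_def q_def)
        moreover have "q k \<in> \<Omega>" using qp[of k] cd by auto
        ultimately show ?thesis using True cd by (auto simp: u_def p G_def D_def)
      qed
      moreover have "(\<lambda>k. K (q k) y) \<longlonglongrightarrow> K x y"
      proof -
        have yO: "y \<in> \<Omega>" using True cd by (auto simp: D_def)
        have xO: "x \<in> \<Omega>" using True cd by (auto simp: D_def)
        have "isCont (\<lambda>x. K x y) x"
          using cont[OF yO] True xO \<Omega>o by (simp add: continuous_on_eq_continuous_at)
        moreover have "q \<longlonglongrightarrow> x"
        proof -
          have "(\<lambda>k. 2 * (d - c) / (real k + 2)) \<longlonglongrightarrow> 0"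
            by real_asymp
          then have "(\<lambda>k. q k - x) \<longlonglongrightarrow> 0"
            by (rule Lim_null_comparison[rotated]) (use qp in auto)
          then show ?thesis by (simp add: LIM_zero_iff)
        qed
        ultimately show ?thesis by (rule isCont_tendsto_compose)
      qed
      ultimately show ?thesis using True by (simp add: p D_def)
    qed
  qed
qed


locale kern =
  fixes K :: "real \<Rightarrow> real \<Rightarrow> real" and \<Omega> :: "real set" and c d Cb :: real and N :: "real set"
  assumes cd: "c < d" and sub: "{c<..<d} \<subseteq> \<Omega>" and \<Omega>o: "open \<Omega>"
    and N: "N \<in> null_sets lebesgue"
    and cont: "\<And>y. y \<in> \<Omega> \<Longrightarrow> y \<notin> N \<Longrightarrow> continuous_on \<Omega> (\<lambda>x. K x y)"
    and meas: "\<And>x. x \<in> \<Omega> \<Longrightarrow> set_borel_measurable lebesgue \<Omega> (K x)"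
    and sym: "\<And>x y. x \<in> \<Omega> \<Longrightarrow> y \<in> \<Omega> \<Longrightarrow> K x y = K y x"
    and bd: "\<And>x y. x \<in> \<Omega> \<Longrightarrow> y \<in> \<Omega> \<Longrightarrow> 0 \<le> K x y \<and> K x y \<le> Cb"
begin

definition "D = {c<..<d}"
definition "Kh = (\<lambda>x y. indicator D x * indicator D y * indicator (-N) x * indicator (-N) y * K x y)"

lemma D_sets[measurable]: "D \<in> sets lebesgue" by (simp add: D_def)
lemma N_sets[measurable]: "- N \<in> sets lebesgue" using N by (auto simp: Compl_in_sets_lebesgue)

lemma Kh_meas[measurable]: "(\<lambda>p. Kh (fst p) (snd p)) \<in> borel_measurable (lebesgue \<Otimes>\<^sub>M lebesgue)"
  unfolding Kh_def D_def using Kh_measurable[OF cd sub \<Omega>o _ cont meas] N by auto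

lemma Kh_meas'[measurable]: "case_prod Kh \<in> borel_measurable (lebesgue \<Otimes>\<^sub>M lebesgue)"
  using Kh_meas by (simp add: case_prod_beta')

lemma Kh_meas2[measurable]: "Kh x \<in> borel_measurable lebesgue"
  using measurable_Pair2[OF Kh_meas', of x] by simp

lemma Kh_bd: "0 \<le> Kh x y" "Kh x y \<le> Cb"
proof -
  have "0 \<le> Kh x y \<and> Kh x y \<le> Cb"
  proof (cases "x \<in> D \<and> y \<in> D \<and> x \<notin> N \<and> y \<notin> N")
    case True
    then have "x \<in> \<Omega>" "y \<in> \<Omega>" using sub by (auto simp: D_def)
    then show ?thesis using bd[of x y] True by (auto simp: Kh_def)
  next
    case False
    have "(c+d)/2 \<in> {c<..<d}" using cd by auto
    then have "(c+d)/2 \<in> \<Omega>" using sub by auto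
    then have "0 \<le> Cb" using bd[of "(c+d)/2" "(c+d)/2"] by auto
    then show ?thesis using False by (auto simp: Kh_def)
  qed
  then show "0 \<le> Kh x y" "Kh x y \<le> Cb" by auto
qed

lemma Cb_nonneg: "0 \<le> Cb" using Kh_bd order_trans by blast

lemma Kh_sym: "Kh x y = Kh y x"
proof (cases "x \<in> D \<and> y \<in> D")
  case True
  then have "x \<in> \<Omega>" "y \<in> \<Omega>" using sub by (auto simp: D_def)
  then show ?thesis using sym[of x y] by (auto simp: Kh_def)
qed (auto simp: Kh_def)

lemma nlop_Kh:
  assumes f: "set_borel_measurable lebesgue D f" and x: "x \<in> D" "x \<notin> N"
  shows "nlop K D f x = (\<integral>y. Kh x y * (indicator D y * f y) \<partial>lebesgue)"
proof -
  have xO: "x \<in> \<Omega>" using x sub by (auto simp: D_def)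
  have m1: "(\<lambda>y. indicator \<Omega> y * K x y) \<in> borel_measurable lebesgue"
    using meas[OF xO] by (simp add: set_borel_measurable_def)
  have m2: "(\<lambda>y. indicator D y * f y) \<in> borel_measurable lebesgue"
    using f by (simp add: set_borel_measurable_def)
  have "nlop K D f x = (\<integral>y. (indicator \<Omega> y * K x y) * (indicator D y * f y) \<partial>lebesgue)"
    unfolding nlop_def set_lebesgue_integral_def
    by (intro Bochner_Integration.integral_cong refl) (use sub in \<open>auto simp: D_def indicator_def\<close>)
  also have "\<dots> = (\<integral>y. Kh x y * (indicator D y * f y) \<partial>lebesgue)"
  proof (rule integral_cong_AE)
    show "(\<lambda>y. indicator \<Omega> y * K x y * (indicator D y * f y)) \<in> borel_measurable lebesgue"
      using m1 m2 by measurable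
    show "(\<lambda>y. Kh x y * (indicator D y * f y)) \<in> borel_measurable lebesgue"
      using m2 by measurable
    show "AE y in lebesgue. indicator \<Omega> y * K x y * (indicator D y * f y) = Kh x y * (indicator D y * f y)"
      using AE_not_in[OF N] by eventually_elim (use x sub in \<open>auto simp: Kh_def D_def indicator_def\<close>)
  qed
  finally show ?thesis .
qed

lemma nlop_meas:
  assumes f: "set_borel_measurable lebesgue D f"
  shows "(\<lambda>x. indicator D x * nlop K D f x) \<in> borel_measurable lebesgue"
proof (rule lebesgue_measurable_AE_eq[OF N])
  have m2[measurable]: "(\<lambda>y. indicator D y * f y) \<in> borel_measurable lebesgue"
    using f by (simp add: set_borel_measurable_def)
  have "(\<lambda>p. Kh (fst p) (snd p) * (indicator D (snd p) * f (snd p))) \<in> borel_measurable (lebesgue \<Otimes>\<^sub>M lebesgue)"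
    by measurable
  then have "case_prod (\<lambda>x y. Kh x y * (indicator D y * f y)) \<in> borel_measurable (lebesgue \<Otimes>\<^sub>M lebesgue)"
    by (simp add: case_prod_beta')
  then show "(\<lambda>x. indicator D x * (\<integral>y. Kh x y * (indicator D y * f y) \<partial>lebesgue)) \<in> borel_measurable lebesgue"
    using lebSF.borel_measurable_lebesgue_integral by measurable
  fix x assume "x \<notin> N"
  then show "indicator D x * nlop K D f x = indicator D x * (\<integral>y. Kh x y * (indicator D y * f y) \<partial>lebesgue)"
    using nlop_Kh[OF f] by (cases "x \<in> D") auto
qed

lemma nlop_bound:
  assumes f: "set_integrable lebesgue D f" and x: "x \<in> D"
  shows "\<bar>nlop K D f x\<bar> \<le> Cb * (\<integral>y. \<bar>indicator D y * f y\<bar> \<partial>lebesgue)"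
proof -
  have xO: "x \<in> \<Omega>" using x sub by (auto simp: D_def)
  have m1: "(\<lambda>y. indicator \<Omega> y * K x y) \<in> borel_measurable lebesgue"
    using meas[OF xO] by (simp add: set_borel_measurable_def)
  have fi: "integrable lebesgue (\<lambda>y. indicator D y * f y)"
    using f by (simp add: set_integrable_def)
  have eq: "nlop K D f x = (\<integral>y. (indicator \<Omega> y * K x y) * (indicator D y * f y) \<partial>lebesgue)"
    unfolding nlop_def set_lebesgue_integral_def
    by (intro Bochner_Integration.integral_cong refl) (use sub in \<open>auto simp: D_def indicator_def\<close>)
  have "\<bar>\<integral>y. (indicator \<Omega> y * K x y) * (indicator D y * f y) \<partial>lebesgue\<bar>
      \<le> (\<integral>y. \<bar>(indicator \<Omega> y * K x y) * (indicator D y * f y)\<bar> \<partial>lebesgue)"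
    by (rule integral_abs_bound)
  also have "\<dots> \<le> (\<integral>y. Cb * \<bar>indicator D y * f y\<bar> \<partial>lebesgue)"
  proof (rule integral_mono)
    show "integrable lebesgue (\<lambda>y. Cb * \<bar>indicator D y * f y\<bar>)" using fi by auto
    show "integrable lebesgue (\<lambda>y. \<bar>indicator \<Omega> y * K x y * (indicator D y * f y)\<bar>)"
    proof (rule Bochner_Integration.integrable_bound[OF integrable_mult_right[OF integrable_abs[OF fi]]])
      show "(\<lambda>y. \<bar>indicator \<Omega> y * K x y * (indicator D y * f y)\<bar>) \<in> borel_measurable lebesgue"
        using m1 fi by measurable
      show "AE y in lebesgue. norm \<bar>indicator \<Omega> y * K x y * (indicator D y * f y)\<bar> \<le> norm (Cb * \<bar>indicator D y * f y\<bar>)"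
        using bd[OF xO] Cb_nonneg by (auto simp: abs_mult indicator_def intro!: mult_right_mono)
    qed
    fix y show "\<bar>indicator \<Omega> y * K x y * (indicator D y * f y)\<bar> \<le> Cb * \<bar>indicator D y * f y\<bar>"
      using bd[OF xO] Cb_nonneg by (auto simp: abs_mult indicator_def intro!: mult_right_mono)
  qed
  finally show ?thesis using eq by simp
qed

end

lemma cont_meas_leb:
  fixes f :: "real \<Rightarrow> real"
  assumes "A \<in> sets borel" "continuous_on A f"
  shows "(\<lambda>x. indicator A x * f x) \<in> borel_measurable lebesgue"
proof -
  have "(\<lambda>x. indicator A x *\<^sub>R f x) \<in> borel_measurable borel"
    by (rule borel_measurable_continuous_on_indicator[OF assms])
  then have "(\<lambda>x. indicator A x *\<^sub>R f x) \<in> borel_measurable lborel"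
    by (simp add: measurable_lborel1)
  then show ?thesis by (simp add: measurable_completion)
qed

lemma amgm_aux:
  fixes a b s t :: real
  assumes "s > 0" "t > 0"
  shows "a * b \<le> (a\<^sup>2 / s * t + s * (b\<^sup>2 / t)) / 2"
proof -
  have "0 \<le> (a * t - b * s)\<^sup>2" by simp
  then have "2 * (a * b * (s * t)) \<le> a\<^sup>2 * t\<^sup>2 + b\<^sup>2 * s\<^sup>2" by (simp add: power2_eq_square algebra_simps)
  moreover have "2 * ((a\<^sup>2 / s * t + s * (b\<^sup>2 / t)) / 2 * (s * t)) = a\<^sup>2 * t\<^sup>2 + b\<^sup>2 * s\<^sup>2"
    using assms by (simp add: field_simps power2_eq_square)
  ultimately have "(a * b) * (s * t) \<le> (a\<^sup>2 / s * t + s * (b\<^sup>2 / t)) / 2 * (s * t)" by linarith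
  then show ?thesis using assms by (simp add: mult_le_cancel_right)
qed

lemma abs_le_1_sq: "\<bar>t\<bar> \<le> 1 + t\<^sup>2" for t :: real
proof (cases "\<bar>t\<bar> \<le> 1")
  case True then show ?thesis by (smt (verit) zero_le_power2)
next
  case False
  then have "\<bar>t\<bar> * 1 \<le> \<bar>t\<bar> * \<bar>t\<bar>" by (intro mult_left_mono) auto
  then show ?thesis by (simp add: power2_eq_square abs_mult_self_eq)
qed

lemma integrable_prod_bound:
  fixes F :: "real \<times> real \<Rightarrow> real" and g h :: "real \<Rightarrow> real"
  assumes F[measurable]: "F \<in> borel_measurable (lebesgue \<Otimes>\<^sub>M lebesgue)"
    and g: "integrable lebesgue g" and h: "integrable lebesgue h"
    and bnd: "\<And>x y. \<bar>F (x, y)\<bar> \<le> g x * h y" and g0: "\<And>x. 0 \<le> g x" and h0: "\<And>y. 0 \<le> h y"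
  shows "integrable (lebesgue \<Otimes>\<^sub>M lebesgue) F"
proof (rule lebP.Fubini_integrable[OF F])
  have Fy: "integrable lebesgue (\<lambda>y. F (x, y))" for x
  proof (rule Bochner_Integration.integrable_bound[OF integrable_mult_right[OF h, of "g x"]])
    show "(\<lambda>y. F (x, y)) \<in> borel_measurable lebesgue" by measurable
    show "AE y in lebesgue. norm (F (x, y)) \<le> norm (g x * h y)"
      using bnd g0 h0 by (auto simp: abs_mult)
  qed
  then show "AE x in lebesgue. integrable lebesgue (\<lambda>y. F (x, y))" by simp
  show "integrable lebesgue (\<lambda>x. LINT y|lebesgue. norm (F (x, y)))"
  proof (rule Bochner_Integration.integrable_bound[OF integrable_mult_left[OF g, of "integral\<^sup>L lebesgue h"]])
    have "case_prod (\<lambda>x y. norm (F (x, y))) \<in> borel_measurable (lebesgue \<Otimes>\<^sub>M lebesgue)"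
      by (simp add: case_prod_beta')
    then show "(\<lambda>x. LINT y|lebesgue. norm (F (x, y))) \<in> borel_measurable lebesgue"
      by (rule lebSF.borel_measurable_lebesgue_integral)
    show "AE x in lebesgue. norm (LINT y|lebesgue. norm (F (x, y))) \<le> norm (g x * integral\<^sup>L lebesgue h)"
    proof (intro AE_I2)
      fix x
      have "(LINT y|lebesgue. norm (F (x, y))) \<le> (LINT y|lebesgue. g x * h y)"
        using Fy[of x] h bnd by (intro integral_mono) auto
      also have "\<dots> = g x * integral\<^sup>L lebesgue h" by simp
      finally show "norm (LINT y|lebesgue. norm (F (x, y))) \<le> norm (g x * integral\<^sup>L lebesgue h)"
        using g0[of x] integral_nonneg_AE[of h lebesgue] h0
        by (simp add: integral_nonneg_AE abs_mult)
    qed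
  qed
qed


context kern begin

lemma D_open: "open D" by (simp add: D_def)
lemma D_borel[measurable]: "D \<in> sets borel" by (simp add: D_def)
lemma D_fin: "emeasure lebesgue D < \<infinity>"
  using cd by (simp add: D_def emeasure_completion)
lemma D_ind_int: "integrable lebesgue (indicator D :: real \<Rightarrow> real)"
  using D_fin by (intro integrable_real_indicator) auto
lemma D_sub_cl: "D \<subseteq> {c..d}" by (auto simp: D_def)

lemma nlop_mono_sub:
  fixes \<phi> :: "real \<Rightarrow> real"
  assumes x: "x \<in> D" and \<phi>nn: "\<And>y. y \<in> \<Omega> \<Longrightarrow> 0 \<le> \<phi> y"
    and \<phi>int: "set_integrable lebesgue \<Omega> (\<lambda>y. K x y * \<phi> y)"
  shows "nlop K D \<phi> x \<le> nlop K \<Omega> \<phi> x"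
proof -
  have xO: "x \<in> \<Omega>" using x sub by (auto simp: D_def)
  have iO: "integrable lebesgue (\<lambda>y. indicator \<Omega> y * (K x y * \<phi> y))"
    using \<phi>int by (simp add: set_integrable_def)
  have eqD: "(\<lambda>y. indicator D y * (K x y * \<phi> y)) = (\<lambda>y. indicator D y * (indicator \<Omega> y * (K x y * \<phi> y)))"
    by (rule ext) (use sub in \<open>auto simp: D_def indicator_def\<close>)
  have iD: "integrable lebesgue (\<lambda>y. indicator D y * (K x y * \<phi> y))"
    unfolding eqD
  proof (rule Bochner_Integration.integrable_bound[OF iO])
    show "(\<lambda>y. indicator D y * (indicator \<Omega> y * (K x y * \<phi> y))) \<in> borel_measurable lebesgue"
      using borel_measurable_integrable[OF iO] by measurable
    show "AE y in lebesgue. norm (indicator D y * (indicator \<Omega> y * (K x y * \<phi> y))) \<le> norm (indicator \<Omega> y * (K x y * \<phi> y))"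
      by (auto simp: indicator_def)
  qed
  have "(\<integral>y. indicator D y * (K x y * \<phi> y) \<partial>lebesgue) \<le> (\<integral>y. indicator \<Omega> y * (K x y * \<phi> y) \<partial>lebesgue)"
  proof (rule integral_mono[OF iD iO])
    fix y
    show "indicator D y * (K x y * \<phi> y) \<le> indicator \<Omega> y * (K x y * \<phi> y)"
    proof (cases "y \<in> \<Omega>")
      case True
      then show ?thesis using bd[OF xO True] \<phi>nn[OF True] by (auto simp: indicator_def)
    next
      case False
      then have "y \<notin> D" using sub by (auto simp: D_def)
      then show ?thesis using False by simp
    qed
  qed
  then show ?thesis by (simp add: nlop_def set_lebesgue_integral_def)
qed

lemma part1_core:
  fixes \<phi> a \<psi> :: "real \<Rightarrow> real" and l A :: real
  assumes \<phi>pos: "\<And>x. x \<in> {c..d} \<Longrightarrow> \<phi> x > 0" and \<phi>cont: "continuous_on {c..d} \<phi>"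
    and \<phi>nn: "\<And>y. y \<in> \<Omega> \<Longrightarrow> 0 \<le> \<phi> y"
    and \<phi>int: "\<And>x. x \<in> D \<Longrightarrow> set_integrable lebesgue \<Omega> (\<lambda>y. K x y * \<phi> y)"
    and ineq: "\<And>x. x \<in> D \<Longrightarrow> nlop K \<Omega> \<phi> x + a x * \<phi> x + l * \<phi> x \<le> 0"
    and acont: "continuous_on D a" and abd: "\<And>x. x \<in> D \<Longrightarrow> \<bar>a x\<bar> \<le> A"
    and \<psi>m: "set_borel_measurable lebesgue D \<psi>" and \<psi>2: "set_integrable lebesgue D (\<lambda>x. (\<psi> x)\<^sup>2)"
    and \<psi>0: "(LINT x:D|lebesgue. (\<psi> x)\<^sup>2) \<noteq> 0"
  shows "l \<le> -(LINT x:D|lebesgue. (nlop K D \<psi> x + a x * \<psi> x) * \<psi> x) / (LINT x:D|lebesgue. (\<psi> x)\<^sup>2)"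
proof -
  obtain m where m: "m > 0" "\<And>x. x \<in> {c..d} \<Longrightarrow> m \<le> \<phi> x"
  proof -
    obtain x0 where "x0 \<in> {c..d}" "\<forall>y\<in>{c..d}. \<phi> x0 \<le> \<phi> y"
      using continuous_attains_inf[OF compact_Icc _ \<phi>cont] cd by auto
    then show ?thesis using that[of "\<phi> x0"] \<phi>pos by auto
  qed
  obtain Mp where Mp: "\<And>x. x \<in> {c..d} \<Longrightarrow> \<phi> x \<le> Mp"
  proof -
    obtain x0 where "x0 \<in> {c..d}" "\<forall>y\<in>{c..d}. \<phi> y \<le> \<phi> x0"
      using continuous_attains_sup[OF compact_Icc _ \<phi>cont] cd by auto
    then show ?thesis using that[of "\<phi> x0"] by auto
  qed
  have A0: "0 \<le> A" using abd[of "(c+d)/2"] cd by (auto simp: D_def)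
  define ps where "ps x = indicator D x * \<psi> x" for x
  define ph where "ph x = indicator D x * \<phi> x" for x
  define u where "u x = indicator D x * ((\<psi> x)\<^sup>2 / \<phi> x)" for x
  define S where "S = (LINT x:D|lebesgue. (\<psi> x)\<^sup>2)"
  have psm[measurable]: "ps \<in> borel_measurable lebesgue"
    using \<psi>m by (simp add: set_borel_measurable_def ps_def[abs_def])
  have ps2: "integrable lebesgue (\<lambda>x. indicator D x * (\<psi> x)\<^sup>2)"
    using \<psi>2 by (simp add: set_integrable_def)
  have ps2': "integrable lebesgue (\<lambda>x. (ps x)\<^sup>2)"
  proof -
    have "(\<lambda>x. (ps x)\<^sup>2) = (\<lambda>x. indicator D x * (\<psi> x)\<^sup>2)"
      by (auto simp: fun_eq_iff ps_def indicator_def)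
    then show ?thesis using ps2 by simp
  qed
  have psi: "integrable lebesgue ps"
  proof (rule Bochner_Integration.integrable_bound[OF Bochner_Integration.integrable_add[OF D_ind_int ps2]])
    show "AE x in lebesgue. norm (ps x) \<le> norm (indicator D x + indicator D x * (\<psi> x)\<^sup>2)"
    proof (intro AE_I2)
      fix x
      have "\<bar>\<psi> x\<bar> \<le> 1 + (\<psi> x)\<^sup>2" by (rule abs_le_1_sq)
      then show "norm (ps x) \<le> norm (indicator D x + indicator D x * (\<psi> x)\<^sup>2)"
        by (auto simp: ps_def indicator_def)
    qed
  qed simp
  have phm[measurable]: "ph \<in> borel_measurable lebesgue"
    unfolding ph_def[abs_def]
    by (rule cont_meas_leb[OF D_borel continuous_on_subset[OF \<phi>cont D_sub_cl]])
  have phi: "integrable lebesgue ph"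
  proof (rule Bochner_Integration.integrable_bound[OF integrable_mult_right[OF D_ind_int, of Mp]])
    show "AE x in lebesgue. norm (ph x) \<le> norm (Mp * indicator D x)"
    proof (intro AE_I2)
      fix x show "norm (ph x) \<le> norm (Mp * indicator D x)"
      proof (cases "x \<in> D")
        case True
        then have "0 < \<phi> x" "\<phi> x \<le> Mp" using \<phi>pos Mp D_sub_cl by auto
        then show ?thesis using True by (simp add: ph_def)
      qed (simp add: ph_def)
    qed
  qed simp
  have ph0: "0 \<le> ph x" for x using \<phi>pos D_sub_cl by (auto simp: ph_def indicator_def subset_eq less_imp_le)
  have um[measurable]: "u \<in> borel_measurable lebesgue"
  proof -
    have "continuous_on D (\<lambda>x. 1 / \<phi> x)"
      using continuous_on_subset[OF \<phi>cont D_sub_cl] \<phi>pos D_sub_cl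
      by (intro continuous_intros) (auto simp: subset_eq dest!: less_imp_neq[symmetric])
    then have [measurable]: "(\<lambda>x. indicator D x * (1 / \<phi> x)) \<in> borel_measurable lebesgue"
      by (rule cont_meas_leb[OF D_borel])
    have "u = (\<lambda>x. (ps x)\<^sup>2 * (indicator D x * (1 / \<phi> x)))"
      by (auto simp: u_def ps_def indicator_def fun_eq_iff)
    then show ?thesis by (simp only:) measurable
  qed
  have u0: "0 \<le> u x" for x using \<phi>pos D_sub_cl by (auto simp: u_def indicator_def subset_eq less_imp_le)
  have ui: "integrable lebesgue u"
  proof (rule Bochner_Integration.integrable_bound[OF integrable_mult_right[OF ps2, of "1/m"]])
    show "AE x in lebesgue. norm (u x) \<le> norm (1 / m * (indicator D x * (\<psi> x)\<^sup>2))"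
    proof (intro AE_I2)
      fix x show "norm (u x) \<le> norm (1 / m * (indicator D x * (\<psi> x)\<^sup>2))"
      proof (cases "x \<in> D")
        case True
        then have "m \<le> \<phi> x" using m D_sub_cl by auto
        then have "(\<psi> x)\<^sup>2 / \<phi> x \<le> (\<psi> x)\<^sup>2 / m" using m by (intro divide_left_mono) auto
        then show ?thesis using True u0[of x] m by (simp add: u_def)
      qed (simp add: u_def)
    qed
  qed simp

  define F1 where "F1 p = Kh (fst p) (snd p) * ps (fst p) * ps (snd p)" for p
  define F2 where "F2 p = Kh (fst p) (snd p) * u (fst p) * ph (snd p)" for p
  define F3 where "F3 p = Kh (fst p) (snd p) * ph (fst p) * u (snd p)" for p
  have F1m[measurable]: "F1 \<in> borel_measurable (lebesgue \<Otimes>\<^sub>M lebesgue)" unfolding F1_def[abs_def] by measurable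
  have F2m[measurable]: "F2 \<in> borel_measurable (lebesgue \<Otimes>\<^sub>M lebesgue)" unfolding F2_def[abs_def] by measurable
  have F3m[measurable]: "F3 \<in> borel_measurable (lebesgue \<Otimes>\<^sub>M lebesgue)" unfolding F3_def[abs_def] by measurable
  have Kb: "\<bar>Kh x y\<bar> \<le> Cb" for x y using Kh_bd[of x y] by simp
  have F1i: "integrable (lebesgue \<Otimes>\<^sub>M lebesgue) F1"
    by (rule integrable_prod_bound[OF F1m integrable_mult_right[OF integrable_abs[OF psi], of Cb] integrable_abs[OF psi]])
       (use Kb Cb_nonneg in \<open>auto simp: F1_def abs_mult intro!: mult_right_mono\<close>)
  have F2i: "integrable (lebesgue \<Otimes>\<^sub>M lebesgue) F2"
    by (rule integrable_prod_bound[OF F2m integrable_mult_right[OF ui, of Cb] phi])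
       (use Kb Cb_nonneg u0 ph0 in \<open>auto simp: F2_def abs_mult intro!: mult_right_mono\<close>)
  have F3i: "integrable (lebesgue \<Otimes>\<^sub>M lebesgue) F3"
    by (rule integrable_prod_bound[OF F3m integrable_mult_right[OF phi, of Cb] ui])
       (use Kb Cb_nonneg u0 ph0 in \<open>auto simp: F3_def abs_mult intro!: mult_right_mono\<close>)
  have F23: "integral\<^sup>L (lebesgue \<Otimes>\<^sub>M lebesgue) F3 = integral\<^sup>L (lebesgue \<Otimes>\<^sub>M lebesgue) F2"
  proof -
    have "(\<lambda>(x,y). F2 (y,x)) = F3" by (auto simp: F2_def F3_def Kh_sym fun_eq_iff)
    then show ?thesis using lebP.integral_product_swap[OF F2m] by simp
  qed
  have F123: "integral\<^sup>L (lebesgue \<Otimes>\<^sub>M lebesgue) F1 \<le> integral\<^sup>L (lebesgue \<Otimes>\<^sub>M lebesgue) F2"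
  proof -
    have "integral\<^sup>L (lebesgue \<Otimes>\<^sub>M lebesgue) F1 \<le> integral\<^sup>L (lebesgue \<Otimes>\<^sub>M lebesgue) (\<lambda>p. (F2 p + F3 p) / 2)"
    proof (rule integral_mono[OF F1i])
      show "integrable (lebesgue \<Otimes>\<^sub>M lebesgue) (\<lambda>p. (F2 p + F3 p) / 2)" using F2i F3i by auto
      fix p :: "real \<times> real"
      obtain x y where p: "p = (x, y)" by (cases p)
      show "F1 p \<le> (F2 p + F3 p) / 2"
      proof (cases "x \<in> D \<and> y \<in> D")
        case True
        then have "\<phi> x > 0" "\<phi> y > 0" using \<phi>pos D_sub_cl by auto
        from amgm_aux[OF this, of "\<psi> x" "\<psi> y"]
        have "\<psi> x * \<psi> y \<le> ((\<psi> x)\<^sup>2 / \<phi> x * \<phi> y + \<phi> x * ((\<psi> y)\<^sup>2 / \<phi> y)) / 2" .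
        from mult_left_mono[OF this Kh_bd(1)[of x y]] show ?thesis
          using True by (simp add: p F1_def F2_def F3_def ps_def ph_def u_def algebra_simps)
      next
        case False
        then show ?thesis by (auto simp: p F1_def F2_def F3_def ps_def ph_def u_def)
      qed
    qed
    also have "\<dots> = integral\<^sup>L (lebesgue \<Otimes>\<^sub>M lebesgue) F2"
      using F2i F3i F23 by simp
    finally show ?thesis .
  qed
  have inner1: "(\<integral>y. F1 (x, y) \<partial>lebesgue) = indicator D x * (nlop K D \<psi> x * \<psi> x)" if "x \<notin> N" for x
  proof (cases "x \<in> D")
    case True
    have "(\<lambda>y. F1 (x, y)) = (\<lambda>y. ps x * (Kh x y * (indicator D y * \<psi> y)))"
      by (auto simp: F1_def ps_def fun_eq_iff)
    then have "(\<integral>y. F1 (x, y) \<partial>lebesgue) = ps x * (\<integral>y. Kh x y * (indicator D y * \<psi> y) \<partial>lebesgue)"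
      by simp
    also have "\<dots> = ps x * nlop K D \<psi> x" using nlop_Kh[OF \<psi>m True that] by simp
    finally show ?thesis using True by (simp add: ps_def)
  qed (simp add: F1_def ps_def)
  have inner2: "(\<integral>y. F2 (x, y) \<partial>lebesgue) \<le> indicator D x * (- (a x + l) * (\<psi> x)\<^sup>2)" if "x \<notin> N" for x
  proof (cases "x \<in> D")
    case True
    have phb: "set_borel_measurable lebesgue D \<phi>" using phm by (simp add: set_borel_measurable_def ph_def[abs_def])
    have px: "\<phi> x > 0" using \<phi>pos D_sub_cl True by auto
    have "(\<lambda>y. F2 (x, y)) = (\<lambda>y. u x * (Kh x y * (indicator D y * \<phi> y)))"
      by (auto simp: F2_def ph_def fun_eq_iff)
    then have "(\<integral>y. F2 (x, y) \<partial>lebesgue) = u x * (\<integral>y. Kh x y * (indicator D y * \<phi> y) \<partial>lebesgue)"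
      by simp
    also have "\<dots> = u x * nlop K D \<phi> x" using nlop_Kh[OF phb True that] by simp
    also have "\<dots> \<le> u x * nlop K \<Omega> \<phi> x"
      using nlop_mono_sub[OF True \<phi>nn \<phi>int[OF True]] u0 by (intro mult_left_mono) auto
    also have "\<dots> \<le> u x * (- (a x + l) * \<phi> x)"
      using ineq[OF True] u0 by (intro mult_left_mono) (auto simp: algebra_simps)
    also have "\<dots> = indicator D x * (- (a x + l) * (\<psi> x)\<^sup>2)"
      using True px by (simp add: u_def)
    finally show ?thesis .
  qed (simp add: F2_def u_def)
  have AEN: "AE x in lebesgue. x \<notin> N" by (rule AE_not_in[OF N])
  have am: "(\<lambda>x. indicator D x * a x) \<in> borel_measurable lebesgue"
    by (rule cont_meas_leb[OF D_borel acont])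
  have ai: "integrable lebesgue (\<lambda>x. indicator D x * (a x * (\<psi> x)\<^sup>2))"
  proof (rule Bochner_Integration.integrable_bound[OF integrable_mult_right[OF ps2, of A]])
    show "(\<lambda>x. indicator D x * (a x * (\<psi> x)\<^sup>2)) \<in> borel_measurable lebesgue"
    proof -
      have "(\<lambda>x. indicator D x * (a x * (\<psi> x)\<^sup>2)) = (\<lambda>x. (indicator D x * a x) * (ps x)\<^sup>2)"
        by (auto simp: ps_def indicator_def fun_eq_iff)
      then show ?thesis using am by simp
    qed
    show "AE x in lebesgue. norm (indicator D x * (a x * (\<psi> x)\<^sup>2)) \<le> norm (A * (indicator D x * (\<psi> x)\<^sup>2))"
      using abd A0 by (auto simp: indicator_def abs_mult intro!: AE_I2 mult_right_mono)
  qed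
  have q1m: "(\<lambda>x. indicator D x * (nlop K D \<psi> x * \<psi> x)) \<in> borel_measurable lebesgue"
  proof -
    have "(\<lambda>x. indicator D x * (nlop K D \<psi> x * \<psi> x)) = (\<lambda>x. (indicator D x * nlop K D \<psi> x) * ps x)"
      by (auto simp: ps_def indicator_def fun_eq_iff)
    then show ?thesis using nlop_meas[OF \<psi>m] by simp
  qed
  have F1fm: "(\<lambda>x. \<integral>y. F1 (x, y) \<partial>lebesgue) \<in> borel_measurable lebesgue"
    using lebP.integrable_fst'[OF F1i] by (rule borel_measurable_integrable)
  have Q_eq: "(\<integral>x. indicator D x * (nlop K D \<psi> x * \<psi> x) \<partial>lebesgue) = (\<integral>x. (\<integral>y. F1 (x, y) \<partial>lebesgue) \<partial>lebesgue)"
    by (rule integral_cong_AE[OF q1m F1fm]) (use AEN in \<open>eventually_elim, simp add: inner1\<close>)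
  have Qi: "integrable lebesgue (\<lambda>x. indicator D x * (nlop K D \<psi> x * \<psi> x))"
    using integrable_cong_AE[OF q1m F1fm] AEN lebP.integrable_fst'[OF F1i]
    by (metis (mono_tags, lifting) AE_mp AE_I2 inner1)
  have T_split: "(LINT x:D|lebesgue. (nlop K D \<psi> x + a x * \<psi> x) * \<psi> x)
      = (\<integral>x. indicator D x * (nlop K D \<psi> x * \<psi> x) \<partial>lebesgue) + (\<integral>x. indicator D x * (a x * (\<psi> x)\<^sup>2) \<partial>lebesgue)"
  proof -
    have "(LINT x:D|lebesgue. (nlop K D \<psi> x + a x * \<psi> x) * \<psi> x)
        = (\<integral>x. indicator D x * (nlop K D \<psi> x * \<psi> x) + indicator D x * (a x * (\<psi> x)\<^sup>2) \<partial>lebesgue)"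
      unfolding set_lebesgue_integral_def
      by (intro Bochner_Integration.integral_cong refl) (simp add: algebra_simps power2_eq_square)
    also have "\<dots> = (\<integral>x. indicator D x * (nlop K D \<psi> x * \<psi> x) \<partial>lebesgue) + (\<integral>x. indicator D x * (a x * (\<psi> x)\<^sup>2) \<partial>lebesgue)"
      by (rule Bochner_Integration.integral_add[OF Qi ai])
    finally show ?thesis .
  qed
  have F2fi: "integrable lebesgue (\<lambda>x. \<integral>y. F2 (x, y) \<partial>lebesgue)" by (rule lebP.integrable_fst'[OF F2i])
  have ri: "integrable lebesgue (\<lambda>x. indicator D x * (- (a x + l) * (\<psi> x)\<^sup>2))"
  proof -
    have "(\<lambda>x. indicator D x * (- (a x + l) * (\<psi> x)\<^sup>2)) = (\<lambda>x. - (indicator D x * (a x * (\<psi> x)\<^sup>2)) - l * (indicator D x * (\<psi> x)\<^sup>2))"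
      by (auto simp: fun_eq_iff algebra_simps)
    then show ?thesis using ai ps2 by simp
  qed
  have "(\<integral>x. indicator D x * (nlop K D \<psi> x * \<psi> x) \<partial>lebesgue) = integral\<^sup>L (lebesgue \<Otimes>\<^sub>M lebesgue) F1"
    using Q_eq lebP.integral_fst'[OF F1i] by simp
  also have "\<dots> \<le> integral\<^sup>L (lebesgue \<Otimes>\<^sub>M lebesgue) F2" by (rule F123)
  also have "\<dots> = (\<integral>x. (\<integral>y. F2 (x, y) \<partial>lebesgue) \<partial>lebesgue)" using lebP.integral_fst'[OF F2i] by simp
  also have "\<dots> \<le> (\<integral>x. indicator D x * (- (a x + l) * (\<psi> x)\<^sup>2) \<partial>lebesgue)"
    by (rule integral_mono_AE[OF F2fi ri]) (rule AE_mp[OF AEN], rule AE_I2, rule impI, erule inner2)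
  also have "\<dots> = - (\<integral>x. indicator D x * (a x * (\<psi> x)\<^sup>2) \<partial>lebesgue) - l * S"
  proof -
    have "(\<lambda>x. indicator D x * (- (a x + l) * (\<psi> x)\<^sup>2)) = (\<lambda>x. - (indicator D x * (a x * (\<psi> x)\<^sup>2)) - l * (indicator D x * (\<psi> x)\<^sup>2))"
      by (auto simp: fun_eq_iff algebra_simps)
    then show ?thesis using ai ps2 by (simp add: S_def set_lebesgue_integral_def)
  qed
  finally have T: "(LINT x:D|lebesgue. (nlop K D \<psi> x + a x * \<psi> x) * \<psi> x) \<le> - l * S"
    using T_split by simp
  have S0: "S > 0"
  proof -
    have "0 \<le> S" unfolding S_def set_lebesgue_integral_def by (intro integral_nonneg_AE) (auto simp: indicator_def)
    then show ?thesis using \<psi>0 by (simp add: S_def)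
  qed
  from T S0 show ?thesis by (simp add: S_def[symmetric] field_simps)
qed

end

lemma tailR_nn:
  fixes \<beta> x p :: real
  assumes b: "\<beta> > 1" and xp: "x \<le> p"
  shows "(\<integral>\<^sup>+y. ennreal (indicator {p..} y * (1 + (y - x)) powr (-\<beta>)) \<partial>lebesgue)
         = ennreal ((1 + (p - x)) powr (1 - \<beta>) / (\<beta> - 1))"
proof -
  define F where "F y = - ((1 + (y - x)) powr (1 - \<beta>) / (\<beta> - 1))" for y
  have "(\<integral>\<^sup>+y. ennreal ((1 + (y - x)) powr (-\<beta>)) * indicator {p..} y \<partial>lborel) = ennreal (0 - F p)"
  proof (rule nn_integral_FTC_atLeast)
    show "(\<lambda>y. (1 + (y - x)) powr (-\<beta>)) \<in> borel_measurable borel" by measurable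
    fix y assume y: "p \<le> y"
    then have pos: "0 < 1 + (y - x)" using xp by linarith
    show "DERIV F y :> (1 + (y - x)) powr (-\<beta>)"
    proof -
      have d1: "DERIV (\<lambda>y. 1 + (y - x)) y :> 1"
        by (auto intro!: derivative_eq_intros)
      have "DERIV (\<lambda>y. (1 + (y - x)) powr (1 - \<beta>)) y :> (1 - \<beta>) * (1 + (y - x)) powr (1 - \<beta> - of_nat 1) * 1"
        by (rule DERIV_fun_powr[OF d1 pos])
      then have "DERIV (\<lambda>y. - ((1 + (y - x)) powr (1 - \<beta>) / (\<beta> - 1))) y :>
          - ((1 - \<beta>) * (1 + (y - x)) powr (1 - \<beta> - of_nat 1) * 1 / (\<beta> - 1))"
        by (intro DERIV_minus DERIV_cdivide)
      moreover have "- ((1 - \<beta>) * (1 + (y - x)) powr (1 - \<beta> - of_nat 1) * 1 / (\<beta> - 1)) = (1 + (y - x)) powr (-\<beta>)"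
        using b by (simp add: field_simps)
      ultimately show ?thesis by (simp add: F_def[abs_def])
    qed
    show "0 \<le> (1 + (y - x)) powr (-\<beta>)" by simp
  next
    have "filterlim (\<lambda>y. 1 + (y - x)) at_top at_top" by real_asymp
    then have "((\<lambda>y. (1 + (y - x)) powr (1 - \<beta>)) \<longlongrightarrow> 0) at_top"
      by (rule tendsto_neg_powr[rotated]) (use b in simp)
    then have "((\<lambda>y. (1 + (y - x)) powr (1 - \<beta>) / (\<beta> - 1)) \<longlongrightarrow> 0 / (\<beta> - 1)) at_top"
      by (intro tendsto_divide) (use b in auto)
    then show "(F \<longlongrightarrow> 0) at_top" unfolding F_def using tendsto_minus by fastforce
  qed
  moreover have "(\<integral>\<^sup>+y. ennreal (indicator {p..} y * (1 + (y - x)) powr (-\<beta>)) \<partial>lebesgue)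
      = (\<integral>\<^sup>+y. ennreal ((1 + (y - x)) powr (-\<beta>)) * indicator {p..} y \<partial>lborel)"
    by (simp add: nn_integral_completion indicator_mult_ennreal mult.commute)
  ultimately show ?thesis by (simp add: F_def)
qed

lemma tailL_nn:
  fixes \<beta> x p :: real
  assumes b: "\<beta> > 1" and xp: "p \<le> x"
  shows "(\<integral>\<^sup>+y. ennreal (indicator {..p} y * (1 + (x - y)) powr (-\<beta>)) \<partial>lebesgue)
         = ennreal ((1 + (x - p)) powr (1 - \<beta>) / (\<beta> - 1))"
proof -
  have "(\<integral>\<^sup>+y. ennreal (indicator {..p} y * (1 + (x - y)) powr (-\<beta>)) \<partial>lebesgue)
      = ennreal \<bar>-1\<bar> * (\<integral>\<^sup>+z. ennreal (indicator {..p} (0 + -1 * z) * (1 + (x - (0 + -1 * z))) powr (-\<beta>)) \<partial>lebesgue)"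
    by (rule nn_integral_real_affine_lebesgue) auto
  also have "\<dots> = (\<integral>\<^sup>+z. ennreal (indicator {-p..} z * (1 + (z - (-x))) powr (-\<beta>)) \<partial>lebesgue)"
  proof -
    have e1: "ennreal \<bar>-1::real\<bar> = 1" by simp
    show ?thesis unfolding e1 mult.left_neutral
      by (intro nn_integral_cong) (auto simp: indicator_def add.commute)
  qed
  also have "\<dots> = ennreal ((1 + (-p - (-x))) powr (1 - \<beta>) / (\<beta> - 1))"
    by (rule tailR_nn) (use b xp in auto)
  finally show ?thesis by simp
qed

lemma tailR:
  fixes \<beta> x p :: real
  assumes b: "\<beta> > 1" and xp: "x \<le> p"
  shows "integrable lebesgue (\<lambda>y. indicator {p..} y * (1 + (y - x)) powr (-\<beta>))"
    "(\<integral>y. indicator {p..} y * (1 + (y - x)) powr (-\<beta>) \<partial>lebesgue) = (1 + (p - x)) powr (1 - \<beta>) / (\<beta> - 1)"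
proof -
  have "(\<integral>\<^sup>+y. ennreal (indicator {p..} y * (1 + (y - x)) powr (-\<beta>)) \<partial>lebesgue)
         = ennreal ((1 + (p - x)) powr (1 - \<beta>) / (\<beta> - 1))" by (rule tailR_nn[OF b xp])
  then have "integrable lebesgue (\<lambda>y. indicator {p..} y * (1 + (y - x)) powr (-\<beta>)) \<and>
      (\<integral>y. indicator {p..} y * (1 + (y - x)) powr (-\<beta>) \<partial>lebesgue) = (1 + (p - x)) powr (1 - \<beta>) / (\<beta> - 1)"
    by (subst (asm) nn_integral_eq_integrable) (use b in auto)
  then show "integrable lebesgue (\<lambda>y. indicator {p..} y * (1 + (y - x)) powr (-\<beta>))"
    "(\<integral>y. indicator {p..} y * (1 + (y - x)) powr (-\<beta>) \<partial>lebesgue) = (1 + (p - x)) powr (1 - \<beta>) / (\<beta> - 1)"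
    by auto
qed

lemma tailL:
  fixes \<beta> x p :: real
  assumes b: "\<beta> > 1" and xp: "p \<le> x"
  shows "integrable lebesgue (\<lambda>y. indicator {..p} y * (1 + (x - y)) powr (-\<beta>))"
    "(\<integral>y. indicator {..p} y * (1 + (x - y)) powr (-\<beta>) \<partial>lebesgue) = (1 + (x - p)) powr (1 - \<beta>) / (\<beta> - 1)"
proof -
  have "(\<integral>\<^sup>+y. ennreal (indicator {..p} y * (1 + (x - y)) powr (-\<beta>)) \<partial>lebesgue)
         = ennreal ((1 + (x - p)) powr (1 - \<beta>) / (\<beta> - 1))" by (rule tailL_nn[OF b xp])
  then have "integrable lebesgue (\<lambda>y. indicator {..p} y * (1 + (x - y)) powr (-\<beta>)) \<and>
      (\<integral>y. indicator {..p} y * (1 + (x - y)) powr (-\<beta>) \<partial>lebesgue) = (1 + (x - p)) powr (1 - \<beta>) / (\<beta> - 1)"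
    by (subst (asm) nn_integral_eq_integrable) (use b in auto)
  then show "integrable lebesgue (\<lambda>y. indicator {..p} y * (1 + (x - y)) powr (-\<beta>))"
    "(\<integral>y. indicator {..p} y * (1 + (x - y)) powr (-\<beta>) \<partial>lebesgue) = (1 + (x - p)) powr (1 - \<beta>) / (\<beta> - 1)"
    by auto
qed


lemma integrable_bdd_D:
  fixes f :: "real \<Rightarrow> real"
  assumes "f \<in> borel_measurable lebesgue" "integrable lebesgue (indicator D :: real \<Rightarrow> real)"
    and "\<And>x. \<bar>f x\<bar> \<le> B * indicator D x"
  shows "integrable lebesgue f"
  by (rule Bochner_Integration.integrable_bound[OF integrable_mult_right[OF assms(2), of B]])
     (use assms in \<open>auto intro!: AE_I2 intro: order_trans[OF _ abs_ge_self]\<close>)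

context kern begin

lemma D_sub: "D \<subseteq> \<Omega>" using sub by (simp add: D_def)

lemma part2_core:
  fixes \<phi> a h :: "real \<Rightarrow> real" and l A M H :: real
  assumes \<phi>cont: "continuous_on \<Omega> \<phi>" and \<phi>0: "\<And>y. y \<in> \<Omega> \<Longrightarrow> 0 \<le> \<phi> y"
    and \<phi>M: "\<And>y. y \<in> \<Omega> \<Longrightarrow> \<phi> y \<le> M"
    and ineq: "\<And>x. x \<in> D \<Longrightarrow> 0 \<le> nlop K \<Omega> \<phi> x + (a x + l) * \<phi> x"
    and acont: "continuous_on D a" and abd: "\<And>x. x \<in> D \<Longrightarrow> \<bar>a x\<bar> \<le> A"
    and hcont: "continuous_on D h" and hbd: "\<And>x. x \<in> D \<Longrightarrow> \<bar>h x\<bar> \<le> H"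
    and hdiff: "\<And>x. x \<in> D \<Longrightarrow> nlop K \<Omega> \<phi> x - nlop K D \<phi> x \<le> h x"
    and S0: "(LINT x:D|lebesgue. (\<phi> x)\<^sup>2) > 0"
  shows "set_borel_measurable lebesgue D \<phi>" "set_integrable lebesgue D (\<lambda>x. (\<phi> x)\<^sup>2)"
    "-(LINT x:D|lebesgue. (nlop K D \<phi> x + a x * \<phi> x) * \<phi> x) / (LINT x:D|lebesgue. (\<phi> x)\<^sup>2)
       \<le> l + (LINT x:D|lebesgue. h x * \<phi> x) / (LINT x:D|lebesgue. (\<phi> x)\<^sup>2)"
proof -
  have phD: "continuous_on D \<phi>" using continuous_on_subset[OF \<phi>cont D_sub] .
  have phm[measurable]: "(\<lambda>x. indicator D x * \<phi> x) \<in> borel_measurable lebesgue"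
    by (rule cont_meas_leb[OF D_borel phD])
  show sm: "set_borel_measurable lebesgue D \<phi>" using phm by (simp add: set_borel_measurable_def)
  have am[measurable]: "(\<lambda>x. indicator D x * a x) \<in> borel_measurable lebesgue"
    by (rule cont_meas_leb[OF D_borel acont])
  have hm[measurable]: "(\<lambda>x. indicator D x * h x) \<in> borel_measurable lebesgue"
    by (rule cont_meas_leb[OF D_borel hcont])
  have M0: "0 \<le> M"
  proof -
    have "(c+d)/2 \<in> D" using cd by (auto simp: D_def)
    then have "(c+d)/2 \<in> \<Omega>" using D_sub by auto
    then show ?thesis using \<phi>0 \<phi>M order_trans by blast
  qed
  have phb: "\<bar>indicator D x * \<phi> x\<bar> \<le> M * indicator D x" for x
    using \<phi>0 \<phi>M D_sub by (auto simp: indicator_def subset_eq)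
  have ph2: "\<bar>indicator D x * (\<phi> x)\<^sup>2\<bar> \<le> (M * M) * indicator D x" for x
  proof (cases "x \<in> D")
    case True
    then have "0 \<le> \<phi> x" "\<phi> x \<le> M" using \<phi>0 \<phi>M D_sub by auto
    then show ?thesis using True by (simp add: power2_eq_square mult_mono)
  qed simp
  have ph2i: "integrable lebesgue (\<lambda>x. indicator D x * (\<phi> x)\<^sup>2)"
  proof (rule integrable_bdd_D[OF _ D_ind_int ph2])
    have "(\<lambda>x. indicator D x * (\<phi> x)\<^sup>2) = (\<lambda>x. (indicator D x * \<phi> x)\<^sup>2)"
      by (auto simp: fun_eq_iff indicator_def)
    then show "(\<lambda>x. indicator D x * (\<phi> x)\<^sup>2) \<in> borel_measurable lebesgue" by simp
  qed
  show "set_integrable lebesgue D (\<lambda>x. (\<phi> x)\<^sup>2)" using ph2i by (simp add: set_integrable_def)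
  have phi: "set_integrable lebesgue D \<phi>"
    unfolding set_integrable_def using integrable_bdd_D[OF phm D_ind_int phb] by simp
  define I1 where "I1 = (\<integral>y. \<bar>indicator D y * \<phi> y\<bar> \<partial>lebesgue)"
  have I10: "0 \<le> I1" unfolding I1_def by simp
  have nb: "\<bar>nlop K D \<phi> x\<bar> \<le> Cb * I1" if "x \<in> D" for x
    using nlop_bound[OF phi that] by (simp add: I1_def)
  define g where "g x = indicator D x * ((nlop K D \<phi> x + a x * \<phi> x) * \<phi> x)" for x
  have gm: "g \<in> borel_measurable lebesgue"
  proof -
    have "g = (\<lambda>x. ((indicator D x * nlop K D \<phi> x) + (indicator D x * a x) * (indicator D x * \<phi> x)) * (indicator D x * \<phi> x))"
      by (auto simp: fun_eq_iff g_def indicator_def)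
    then show ?thesis using nlop_meas[OF sm] by simp
  qed
  have gi: "integrable lebesgue g"
  proof (rule integrable_bdd_D[OF gm D_ind_int])
    fix x show "\<bar>g x\<bar> \<le> ((Cb * I1 + A * M) * M) * indicator D x"
    proof (cases "x \<in> D")
      case True
      then have p: "0 \<le> \<phi> x" "\<phi> x \<le> M" using \<phi>0 \<phi>M D_sub by auto
      have "\<bar>nlop K D \<phi> x + a x * \<phi> x\<bar> \<le> Cb * I1 + A * M"
      proof -
        have "\<bar>a x * \<phi> x\<bar> \<le> A * M" using abd[OF True] p by (simp add: abs_mult mult_mono)
        then show ?thesis using nb[OF True] by linarith
      qed
      then have "\<bar>(nlop K D \<phi> x + a x * \<phi> x) * \<phi> x\<bar> \<le> (Cb * I1 + A * M) * M"
        using p by (simp add: abs_mult mult_mono)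
      then show ?thesis using True by (simp add: g_def)
    qed (simp add: g_def)
  qed
  define r where "r x = indicator D x * (l * (\<phi> x)\<^sup>2 + h x * \<phi> x)" for x
  have hi: "integrable lebesgue (\<lambda>x. indicator D x * (h x * \<phi> x))"
    proof (rule integrable_bdd_D[OF _ D_ind_int])
      have "(\<lambda>x. indicator D x * (h x * \<phi> x)) = (\<lambda>x. (indicator D x * h x) * (indicator D x * \<phi> x))"
        by (auto simp: fun_eq_iff indicator_def)
      then show "(\<lambda>x. indicator D x * (h x * \<phi> x)) \<in> borel_measurable lebesgue" by simp
      fix x show "\<bar>indicator D x * (h x * \<phi> x)\<bar> \<le> (H * M) * indicator D x"
      proof (cases "x \<in> D")
        case True
        then have "0 \<le> \<phi> x" "\<phi> x \<le> M" "\<bar>h x\<bar> \<le> H" using \<phi>0 \<phi>M D_sub hbd by auto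
        then show ?thesis using True by (simp add: abs_mult mult_mono)
      qed simp
    qed
  have ri: "integrable lebesgue r"
  proof -
    have "r = (\<lambda>x. l * (indicator D x * (\<phi> x)\<^sup>2) + indicator D x * (h x * \<phi> x))"
      by (auto simp: fun_eq_iff r_def algebra_simps)
    then show ?thesis using hi ph2i by simp
  qed
  have "(\<integral>x. - g x \<partial>lebesgue) \<le> (\<integral>x. r x \<partial>lebesgue)"
  proof (rule integral_mono)
    show "integrable lebesgue (\<lambda>x. - g x)" using gi by simp
    show "integrable lebesgue r" by (rule ri)
    fix x show "- g x \<le> r x"
    proof (cases "x \<in> D")
      case True
      have p: "0 \<le> \<phi> x" using \<phi>0 D_sub True by auto
      have "- (nlop K \<Omega> \<phi> x + a x * \<phi> x) * \<phi> x \<le> (l * \<phi> x) * \<phi> x"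
        using ineq[OF True] p by (intro mult_right_mono) (auto simp: algebra_simps)
      moreover have "(nlop K \<Omega> \<phi> x - nlop K D \<phi> x) * \<phi> x \<le> h x * \<phi> x"
        using hdiff[OF True] p by (intro mult_right_mono) auto
      ultimately have "- ((nlop K D \<phi> x + a x * \<phi> x) * \<phi> x) \<le> l * (\<phi> x)\<^sup>2 + h x * \<phi> x"
        by (simp add: algebra_simps power2_eq_square)
      then show ?thesis using True by (simp add: g_def r_def)
    qed (simp add: g_def r_def)
  qed
  moreover have "(\<integral>x. r x \<partial>lebesgue) = l * (LINT x:D|lebesgue. (\<phi> x)\<^sup>2) + (LINT x:D|lebesgue. h x * \<phi> x)"
  proof -
    have "r = (\<lambda>x. l * (indicator D x * (\<phi> x)\<^sup>2) + indicator D x * (h x * \<phi> x))"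
      by (auto simp: fun_eq_iff r_def algebra_simps)
    then show ?thesis using hi ph2i by (simp add: set_lebesgue_integral_def)
  qed
  moreover have "(\<integral>x. g x \<partial>lebesgue) = (LINT x:D|lebesgue. (nlop K D \<phi> x + a x * \<phi> x) * \<phi> x)"
    by (simp add: g_def[abs_def] set_lebesgue_integral_def)
  ultimately have "- (LINT x:D|lebesgue. (nlop K D \<phi> x + a x * \<phi> x) * \<phi> x)
       \<le> l * (LINT x:D|lebesgue. (\<phi> x)\<^sup>2) + (LINT x:D|lebesgue. h x * \<phi> x)"
    by simp
  then show "-(LINT x:D|lebesgue. (nlop K D \<phi> x + a x * \<phi> x) * \<phi> x) / (LINT x:D|lebesgue. (\<phi> x)\<^sup>2)
       \<le> l + (LINT x:D|lebesgue. h x * \<phi> x) / (LINT x:D|lebesgue. (\<phi> x)\<^sup>2)"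
    using S0 by (simp add: field_simps)
qed

end

lemma le_add_auxL: "0 \<le> (k::real) \<Longrightarrow> 0 \<le> b \<Longrightarrow> v \<le> k * a \<Longrightarrow> v \<le> k * (a + b)"
  by (simp add: distrib_left) (metis add_increasing2 mult_nonneg_nonneg)
lemma le_add_auxR: "0 \<le> (k::real) \<Longrightarrow> 0 \<le> a \<Longrightarrow> v \<le> k * b \<Longrightarrow> v \<le> k * (a + b)"
  using le_add_auxL[of k a v b] by (simp add: add.commute)

lemma nlop_tail:
  fixes K :: "real \<Rightarrow> real \<Rightarrow> real" and \<Omega> :: "real set" and \<phi> :: "real \<Rightarrow> real" and C \<alpha> M R x :: real
  assumes K_meas: "\<And>x. x \<in> \<Omega> \<Longrightarrow> set_borel_measurable lebesgue \<Omega> (K x)"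
    and K_bd: "\<And>x y. x \<in> \<Omega> \<Longrightarrow> y \<in> \<Omega> \<Longrightarrow> 0 \<le> K x y \<and> K x y \<le> C * (1 + \<bar>x - y\<bar>) powr (-\<alpha>)"
    and C: "C > 0" and \<alpha>: "\<alpha> > 1"
    and \<phi>m: "set_borel_measurable lebesgue \<Omega> \<phi>" and \<phi>0: "\<And>y. y \<in> \<Omega> \<Longrightarrow> 0 \<le> \<phi> y"
    and \<phi>M: "\<And>y. y \<in> \<Omega> \<Longrightarrow> \<phi> y \<le> M"
    and x: "x \<in> \<Omega>" "\<bar>x\<bar> < R"
  shows "set_integrable lebesgue \<Omega> (\<lambda>y. K x y * \<phi> y)"
    "nlop K \<Omega> \<phi> x - nlop K (\<Omega> \<inter> {-R<..<R}) \<phi> x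
       \<le> M * C / (\<alpha> - 1) * ((1 + (R - x)) powr (1 - \<alpha>) + (1 + (x + R)) powr (1 - \<alpha>))"
proof -
  have M0: "0 \<le> M" using \<phi>0[OF x(1)] \<phi>M[OF x(1)] by simp
  define v where "v y = indicator \<Omega> y * (K x y * \<phi> y)" for y
  have vm[measurable]: "v \<in> borel_measurable lebesgue"
  proof -
    have m1: "(\<lambda>y. indicator \<Omega> y * K x y) \<in> borel_measurable lebesgue"
      using K_meas[OF x(1)] by (simp add: set_borel_measurable_def)
    have m2: "(\<lambda>y. indicator \<Omega> y * \<phi> y) \<in> borel_measurable lebesgue"
      using \<phi>m by (simp add: set_borel_measurable_def)
    have "v = (\<lambda>y. (indicator \<Omega> y * K x y) * (indicator \<Omega> y * \<phi> y))"
      by (auto simp: fun_eq_iff v_def indicator_def)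
    then show ?thesis using m1 m2 by simp
  qed
  have v0: "0 \<le> v y" for y using K_bd[OF x(1)] \<phi>0 by (auto simp: v_def indicator_def)
  have vb: "v y \<le> M * C * (1 + \<bar>x - y\<bar>) powr (-\<alpha>)" for y
  proof (cases "y \<in> \<Omega>")
    case True
    have "K x y * \<phi> y \<le> (C * (1 + \<bar>x - y\<bar>) powr (-\<alpha>)) * M"
      using K_bd[OF x(1) True] \<phi>0[OF True] \<phi>M[OF True] M0 by (intro mult_mono) auto
    then show ?thesis using True by (simp add: v_def algebra_simps)
  next
    case False
    then show ?thesis using M0 C by (simp add: v_def)
  qed
  define w where "w y = M * C * (indicator {x..} y * (1 + (y - x)) powr (-\<alpha>) + indicator {..x} y * (1 + (x - y)) powr (-\<alpha>))" for y
  have wi: "integrable lebesgue w"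
    unfolding w_def[abs_def]
    using tailR(1)[OF \<alpha> order_refl, of x] tailL(1)[OF \<alpha> order_refl, of x] by auto
  have vi: "integrable lebesgue v"
  proof (rule Bochner_Integration.integrable_bound[OF wi vm])
    show "AE y in lebesgue. norm (v y) \<le> norm (w y)"
    proof (intro AE_I2)
      fix y
      have "v y \<le> w y"
      proof (cases "x \<le> y")
        case True
        then have "\<bar>x - y\<bar> = y - x" by simp
        moreover have "0 \<le> indicator {..x} y * (1 + (x - y)) powr (-\<alpha>)" by simp
        ultimately show ?thesis using vb[of y] True M0 C
          unfolding w_def by (intro le_add_auxL) auto
      next
        case False
        then have "\<bar>x - y\<bar> = x - y" by simp
        moreover have "0 \<le> indicator {x..} y * (1 + (y - x)) powr (-\<alpha>)" by simp
        ultimately show ?thesis using vb[of y] False M0 C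
          unfolding w_def by (intro le_add_auxR) auto
      qed
      then show "norm (v y) \<le> norm (w y)" using v0[of y] by simp
    qed
  qed
  show "set_integrable lebesgue \<Omega> (\<lambda>y. K x y * \<phi> y)"
    using vi by (simp add: set_integrable_def v_def[abs_def])
  define D where "D = \<Omega> \<inter> {-R<..<R}"
  define w2 where "w2 y = M * C * (indicator {R..} y * (1 + (y - x)) powr (-\<alpha>) + indicator {..-R} y * (1 + (x - y)) powr (-\<alpha>))" for y
  have w2i: "integrable lebesgue w2"
    unfolding w2_def[abs_def]
    using tailR(1)[OF \<alpha>, of x R] tailL(1)[OF \<alpha>, of "-R" x] x by auto
  have w2int: "(\<integral>y. w2 y \<partial>lebesgue) = M * C / (\<alpha> - 1) * ((1 + (R - x)) powr (1 - \<alpha>) + (1 + (x + R)) powr (1 - \<alpha>))"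
  proof -
    have "(\<integral>y. w2 y \<partial>lebesgue) = M * C * ((\<integral>y. indicator {R..} y * (1 + (y - x)) powr (-\<alpha>) \<partial>lebesgue)
        + (\<integral>y. indicator {..-R} y * (1 + (x - y)) powr (-\<alpha>) \<partial>lebesgue))"
      unfolding w2_def[abs_def]
      using tailR(1)[OF \<alpha>, of x R] tailL(1)[OF \<alpha>, of "-R" x] x by simp
    also have "\<dots> = M * C * ((1 + (R - x)) powr (1 - \<alpha>) / (\<alpha> - 1) + (1 + (x - -R)) powr (1 - \<alpha>) / (\<alpha> - 1))"
      using tailR(2)[OF \<alpha>, of x R] tailL(2)[OF \<alpha>, of "-R" x] x by simp
    finally show ?thesis by (simp add: algebra_simps add_divide_distrib)
  qed
  have Dm[measurable]: "(\<lambda>y. indicator D y * v y) \<in> borel_measurable lebesgue"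
  proof -
    have "{-R<..<R} \<in> sets lebesgue" by simp
    then have i1: "indicator {-R<..<R} \<in> borel_measurable lebesgue" by (rule borel_measurable_indicator)
    have "(\<lambda>y. indicator D y * v y) = (\<lambda>y. indicator {-R<..<R} y * v y)"
      by (auto simp: fun_eq_iff D_def v_def indicator_def)
    then show ?thesis using i1 vm by (simp add: borel_measurable_times)
  qed
  have Di: "integrable lebesgue (\<lambda>y. indicator D y * v y)"
    by (rule Bochner_Integration.integrable_bound[OF vi Dm]) (auto simp: indicator_def)
  have "nlop K \<Omega> \<phi> x = (\<integral>y. v y \<partial>lebesgue)"
    by (simp add: nlop_def set_lebesgue_integral_def v_def)
  moreover have "nlop K D \<phi> x = (\<integral>y. indicator D y * v y \<partial>lebesgue)"
    unfolding nlop_def set_lebesgue_integral_def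
    by (intro Bochner_Integration.integral_cong refl) (auto simp: v_def D_def indicator_def)
  moreover have "(\<integral>y. v y \<partial>lebesgue) - (\<integral>y. indicator D y * v y \<partial>lebesgue) \<le> (\<integral>y. w2 y \<partial>lebesgue)"
  proof -
    have "(\<integral>y. v y \<partial>lebesgue) - (\<integral>y. indicator D y * v y \<partial>lebesgue) = (\<integral>y. v y - indicator D y * v y \<partial>lebesgue)"
      using vi Di by simp
    also have "\<dots> \<le> (\<integral>y. w2 y \<partial>lebesgue)"
    proof (rule integral_mono)
      show "integrable lebesgue (\<lambda>y. v y - indicator D y * v y)" using vi Di by simp
      show "integrable lebesgue w2" by (rule w2i)
      fix y show "v y - indicator D y * v y \<le> w2 y"
      proof (cases "y \<in> D \<or> y \<notin> \<Omega>")
        case True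
        have "0 \<le> w2 y" using M0 C by (simp add: w2_def)
        then show ?thesis using True by (auto simp: v_def D_def)
      next
        case False
        then have yO: "y \<in> \<Omega>" and yR: "R \<le> y \<or> y \<le> -R" by (auto simp: D_def)
        show ?thesis
        proof (cases "R \<le> y")
          case True
          then have "\<bar>x - y\<bar> = y - x" using x by simp
          moreover have "0 \<le> indicator {..-R} y * (1 + (x - y)) powr (-\<alpha>)" by simp
          ultimately show ?thesis using vb[of y] True False M0 C
            unfolding w2_def by (intro le_add_auxL) auto
        next
          case False2: False
          then have "y \<le> -R" using yR by simp
          then have "\<bar>x - y\<bar> = x - y" using x by simp
          moreover have "0 \<le> indicator {R..} y * (1 + (y - x)) powr (-\<alpha>)" by simp
          ultimately show ?thesis using vb[of y] \<open>y \<le> -R\<close> False False2 M0 C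
            unfolding w2_def by (intro le_add_auxR) auto
        qed
      qed
    qed
    finally show ?thesis .
  qed
  ultimately show "nlop K \<Omega> \<phi> x - nlop K (\<Omega> \<inter> {-R<..<R}) \<phi> x
       \<le> M * C / (\<alpha> - 1) * ((1 + (R - x)) powr (1 - \<alpha>) + (1 + (x + R)) powr (1 - \<alpha>))"
    using w2int by (simp add: D_def)
qed


definition hfun :: "real \<Rightarrow> real \<Rightarrow> real \<Rightarrow> real \<Rightarrow> real" where
  "hfun k \<alpha> R x = k * ((1 + (R - x)) powr (1 - \<alpha>) + (1 + (x + R)) powr (1 - \<alpha>))"

lemma hfun_cont: "continuous_on {-R<..<R} (hfun k \<alpha> R)"
  unfolding hfun_def[abs_def]
  by (intro continuous_intros) auto

lemma powr_le1: "1 \<le> (y::real) \<Longrightarrow> a \<le> 0 \<Longrightarrow> y powr a \<le> 1"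
  using powr_mono2'[of a 1 y] by simp

lemma hfun_bd:
  assumes "\<bar>x\<bar> < R" "0 \<le> k" "\<alpha> > 1"
  shows "0 \<le> hfun k \<alpha> R x" "hfun k \<alpha> R x \<le> 2 * k"
proof -
  show "0 \<le> hfun k \<alpha> R x" using assms by (simp add: hfun_def)
  have "(1 + (R - x)) powr (1 - \<alpha>) \<le> 1" "(1 + (x + R)) powr (1 - \<alpha>) \<le> 1"
    using assms by (auto intro!: powr_le1)
  then have "(1 + (R - x)) powr (1 - \<alpha>) + (1 + (x + R)) powr (1 - \<alpha>) \<le> 2" by linarith
  from mult_left_mono[OF this assms(2)] show "hfun k \<alpha> R x \<le> 2 * k"
    unfolding hfun_def by (simp add: mult.commute)
qed

lemma hfun_bd_inner:
  assumes "\<bar>x\<bar> < r" "r \<le> R" "0 \<le> k" "\<alpha> > 1"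
  shows "hfun k \<alpha> R x \<le> 2 * k * (1 + (R - r)) powr (1 - \<alpha>)"
proof -
  have "(1 + (R - x)) powr (1 - \<alpha>) \<le> (1 + (R - r)) powr (1 - \<alpha>)"
    using assms by (intro powr_mono2') auto
  moreover have "(1 + (x + R)) powr (1 - \<alpha>) \<le> (1 + (R - r)) powr (1 - \<alpha>)"
    using assms by (intro powr_mono2') auto
  ultimately have "(1 + (R - x)) powr (1 - \<alpha>) + (1 + (x + R)) powr (1 - \<alpha>) \<le> 2 * (1 + (R - r)) powr (1 - \<alpha>)"
    by linarith
  from mult_left_mono[OF this assms(3)] show ?thesis
    unfolding hfun_def by (simp add: mult.assoc mult.left_commute)
qed

lemma sq_powr: "0 < (y::real) \<Longrightarrow> (y powr (1 - \<alpha>))\<^sup>2 = y powr (-(2 * \<alpha> - 2))"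
  by (simp add: powr_power algebra_simps)

lemma hfun_sq_int:
  assumes "0 \<le> k" "\<alpha> > 3/2" "0 < R"
  shows "integrable lebesgue (\<lambda>x. indicator {-R<..<R} x * (hfun k \<alpha> R x)\<^sup>2)"
    "(\<integral>x. indicator {-R<..<R} x * (hfun k \<alpha> R x)\<^sup>2 \<partial>lebesgue) \<le> 4 * k\<^sup>2 / (2 * \<alpha> - 3)"
proof -
  have b: "2 * \<alpha> - 2 > 1" using assms by simp
  define g where "g x = 2 * k\<^sup>2 * (indicator {..R} x * (1 + (R - x)) powr (-(2 * \<alpha> - 2))
                    + indicator {-R..} x * (1 + (x - -R)) powr (-(2 * \<alpha> - 2)))" for x
  have gi: "integrable lebesgue g"
    unfolding g_def[abs_def] using tailL(1)[OF b order_refl, of R] tailR(1)[OF b order_refl, of "-R"] by simp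
  have gint: "(\<integral>x. g x \<partial>lebesgue) = 4 * k\<^sup>2 / (2 * \<alpha> - 3)"
  proof -
    have "(\<integral>x. g x \<partial>lebesgue) = 2 * k\<^sup>2 * ((1 + (R - R)) powr (1 - (2 * \<alpha> - 2)) / (2 * \<alpha> - 2 - 1)
         + (1 + (-R - -R)) powr (1 - (2 * \<alpha> - 2)) / (2 * \<alpha> - 2 - 1))"
      unfolding g_def[abs_def]
      using tailL[OF b order_refl, of R] tailR[OF b order_refl, of "-R"] by simp
    then show ?thesis by (simp add: field_simps)
  qed
  have fm: "(\<lambda>x. indicator {-R<..<R} x * (hfun k \<alpha> R x)\<^sup>2) \<in> borel_measurable lebesgue"
    by (rule cont_meas_leb) (auto intro!: continuous_intros hfun_cont)
  have fb: "indicator {-R<..<R} x * (hfun k \<alpha> R x)\<^sup>2 \<le> g x" for x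
  proof (cases "x \<in> {-R<..<R}")
    case True
    have p1: "0 < 1 + (R - x)" "0 < 1 + (x + R)" using True by auto
    have "(hfun k \<alpha> R x)\<^sup>2 \<le> 2 * k\<^sup>2 * (((1 + (R - x)) powr (1 - \<alpha>))\<^sup>2 + ((1 + (x + R)) powr (1 - \<alpha>))\<^sup>2)"
    proof -
      have uv: "(u + v)\<^sup>2 \<le> 2 * (u\<^sup>2 + v\<^sup>2)" for u v :: real
      proof -
        have "0 \<le> (u - v)\<^sup>2" by simp
        then show ?thesis by (simp add: power2_eq_square algebra_simps)
      qed
      define aa where "aa = (1 + (R - x)) powr (1 - \<alpha>)"
      define bb where "bb = (1 + (x + R)) powr (1 - \<alpha>)"
      have "(hfun k \<alpha> R x)\<^sup>2 = k\<^sup>2 * (aa + bb)\<^sup>2" by (simp add: hfun_def aa_def bb_def power_mult_distrib)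
      also have "\<dots> \<le> k\<^sup>2 * (2 * (aa\<^sup>2 + bb\<^sup>2))" by (rule mult_left_mono[OF uv]) simp
      also have "\<dots> = 2 * k\<^sup>2 * (aa\<^sup>2 + bb\<^sup>2)" by simp
      finally show ?thesis by (simp only: aa_def bb_def)
    qed
    also have "\<dots> = g x" using True p1 by (simp add: g_def sq_powr add.commute)
    finally show ?thesis using True by simp
  next
    case False
    have "0 \<le> g x" using assms by (simp add: g_def)
    then show ?thesis using False by simp
  qed
  show fi: "integrable lebesgue (\<lambda>x. indicator {-R<..<R} x * (hfun k \<alpha> R x)\<^sup>2)"
    by (rule Bochner_Integration.integrable_bound[OF gi fm]) (auto intro!: AE_I2 order_trans[OF fb abs_ge_self])
  have "(\<integral>x. indicator {-R<..<R} x * (hfun k \<alpha> R x)\<^sup>2 \<partial>lebesgue) \<le> (\<integral>x. g x \<partial>lebesgue)"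
    by (rule integral_mono[OF fi gi fb])
  then show "(\<integral>x. indicator {-R<..<R} x * (hfun k \<alpha> R x)\<^sup>2 \<partial>lebesgue) \<le> 4 * k\<^sup>2 / (2 * \<alpha> - 3)"
    using gint by linarith
qed


lemma seq_lemma:
  fixes S E :: "nat \<Rightarrow> real" and c1 W \<alpha> \<epsilon> :: real and n1 :: nat
  assumes Smono: "\<And>r n. r \<le> n \<Longrightarrow> S r \<le> S n"
    and S0: "\<And>n. 0 \<le> S n" and Spos: "S n1 > 0"
    and W: "0 \<le> W" and \<alpha>: "\<alpha> > 1" and c1: "0 \<le> c1"
    and Ebd: "\<And>r n t. r \<le> n \<Longrightarrow> n1 \<le> n \<Longrightarrow> t > 0 \<Longrightarrow>
        E n \<le> c1 * real r * (1 + (real n - real r)) powr (1 - \<alpha>) + (t * (S n - S r) + W / t) / 2"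
    and \<epsilon>: "\<epsilon> > 0"
  shows "eventually (\<lambda>n. E n \<le> \<epsilon> * S n) sequentially"
proof (cases "\<forall>B. \<exists>n. S n > B")
  case True
  then obtain n2 where n2: "S n2 > W / \<epsilon>\<^sup>2" by blast
  show ?thesis
  proof (rule eventually_sequentiallyI[of "max n1 n2"])
    fix n assume n: "max n1 n2 \<le> n"
    have Sn: "W / \<epsilon>\<^sup>2 \<le> S n" using n2 Smono[of n2 n] n by simp
    have "E n \<le> c1 * real 0 * (1 + (real n - real 0)) powr (1 - \<alpha>) + (\<epsilon> * (S n - S 0) + W / \<epsilon>) / 2"
      by (rule Ebd) (use n \<epsilon> in auto)
    also have "\<dots> \<le> (\<epsilon> * S n + W / \<epsilon>) / 2" using S0[of 0] \<epsilon> by (simp add: algebra_simps)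
    also have "W / \<epsilon> \<le> \<epsilon> * S n"
    proof -
      have "W / \<epsilon> = \<epsilon> * (W / \<epsilon>\<^sup>2)" using \<epsilon> by (simp add: power2_eq_square field_simps)
      also have "\<dots> \<le> \<epsilon> * S n" using Sn \<epsilon> by (intro mult_left_mono) auto
      finally show ?thesis .
    qed
    then have "(\<epsilon> * S n + W / \<epsilon>) / 2 \<le> \<epsilon> * S n" by simp
    finally show "E n \<le> \<epsilon> * S n" .
  qed
next
  case False
  then obtain B where B: "\<And>n. S n \<le> B" by (auto simp: not_less)
  have bdd: "bdd_above (range S)" by (rule bdd_aboveI2) (rule B)
  define L where "L = (SUP n. S n)"
  have SL: "S n \<le> L" for n unfolding L_def by (rule cSUP_upper[OF _ bdd]) simp
  define \<eta> where "\<eta> = \<epsilon> * S n1 / 2"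
  have \<eta>: "\<eta> > 0" using \<epsilon> Spos by (simp add: \<eta>_def)
  define \<delta> where "\<delta> = \<eta>\<^sup>2 / (W + 1)"
  have \<delta>: "\<delta> > 0" using \<eta> W by (simp add: \<delta>_def)
  obtain r where r: "L - \<delta> < S r"
  proof -
    have "L - \<delta> < (SUP n. S n)" using \<delta> by (simp add: L_def)
    then show ?thesis using that less_cSUP_iff[of UNIV S "L - \<delta>"] bdd by auto
  qed
  define t where "t = (W + 1) / \<eta>"
  have t: "t > 0" using W \<eta> by (simp add: t_def)
  have second: "(t * (S n - S r) + W / t) / 2 \<le> \<eta>" if "r \<le> n" for n
  proof -
    have d: "S n - S r \<le> \<delta>" using SL[of n] r by simp
    have "t * (S n - S r) \<le> t * \<delta>" using d t by (intro mult_left_mono) auto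
    also have "t * \<delta> = \<eta>"
    proof -
      have "W + 1 \<noteq> 0" "\<eta> \<noteq> 0" using \<eta> W by auto
      then show ?thesis unfolding t_def \<delta>_def by (simp add: power2_eq_square)
    qed
    finally have 1: "t * (S n - S r) \<le> \<eta>" .
    have "W / t = W * \<eta> / (W + 1)" using \<eta> W by (simp add: t_def field_simps)
    also have "\<dots> \<le> \<eta>" using \<eta> W by (simp add: field_simps)
    finally show ?thesis using 1 by simp
  qed
  have lim: "(\<lambda>n::nat. c1 * real r * (1 + (real n - real r)) powr (1 - \<alpha>)) \<longlonglongrightarrow> c1 * real r * 0"
  proof (intro tendsto_mult tendsto_const)
    have "filterlim (\<lambda>n::nat. 1 + (real n - real r)) at_top sequentially" by real_asymp
    then show "(\<lambda>n::nat. (1 + (real n - real r)) powr (1 - \<alpha>)) \<longlonglongrightarrow> 0"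
      by (rule tendsto_neg_powr[rotated]) (use \<alpha> in simp)
  qed
  then have ev: "eventually (\<lambda>n. c1 * real r * (1 + (real n - real r)) powr (1 - \<alpha>) < \<eta>) sequentially"
    using \<eta> by (auto dest: order_tendstoD)
  then obtain n3 where n3: "\<And>n. n \<ge> n3 \<Longrightarrow> c1 * real r * (1 + (real n - real r)) powr (1 - \<alpha>) < \<eta>"
    by (auto simp: eventually_sequentially)
  show ?thesis
  proof (rule eventually_sequentiallyI[of "max n1 (max r n3)"])
    fix n assume n: "max n1 (max r n3) \<le> n"
    have "E n \<le> c1 * real r * (1 + (real n - real r)) powr (1 - \<alpha>) + (t * (S n - S r) + W / t) / 2"
      by (rule Ebd) (use n t in auto)
    also have "\<dots> \<le> \<eta> + \<eta>" using n3[of n] second[of n] n by (intro add_mono) auto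
    also have "\<dots> = \<epsilon> * S n1" by (simp add: \<eta>_def)
    also have "\<dots> \<le> \<epsilon> * S n" using Smono[of n1 n] n \<epsilon> by (intro mult_left_mono) auto
    finally show "E n \<le> \<epsilon> * S n" .
  qed
qed


lemma amgm2: "(t::real) > 0 \<Longrightarrow> a * b \<le> (t * a\<^sup>2 + b\<^sup>2 / t) / 2"
  using amgm_aux[of 1 t a b] by (simp add: mult.commute)

lemma E_bound:
  fixes \<phi> :: "real \<Rightarrow> real" and Dn :: "real set" and k \<alpha> R r t M :: real
  assumes Dn: "Dn \<in> sets lebesgue" "Dn \<subseteq> {-R<..<R}"
    and \<phi>m: "(\<lambda>x. indicator Dn x * \<phi> x) \<in> borel_measurable lebesgue"
    and \<phi>b: "\<And>x. x \<in> Dn \<Longrightarrow> 0 \<le> \<phi> x \<and> \<phi> x \<le> M"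
    and k: "0 \<le> k" and M: "0 \<le> M" and \<alpha>: "\<alpha> > 3/2" and R: "0 < R" and r: "0 \<le> r" "r \<le> R" and t: "t > 0"
  shows "(LINT x:Dn|lebesgue. hfun k \<alpha> R x * \<phi> x)
     \<le> 4 * k * M * r * (1 + (R - r)) powr (1 - \<alpha>)
        + (t * ((LINT x:Dn|lebesgue. (\<phi> x)\<^sup>2) - (LINT x:Dn \<inter> {-r<..<r}|lebesgue. (\<phi> x)\<^sup>2)) + (4 * k\<^sup>2 / (2 * \<alpha> - 3)) / t) / 2"
proof -
  define I where "I = {-r<..<r}"
  define h where "h = hfun k \<alpha> R"
  define P where "P = (1 + (R - r)) powr (1 - \<alpha>)"
  have \<alpha>1: "\<alpha> > 1" using \<alpha> by simp
  have P0: "0 \<le> P" by (simp add: P_def)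
  have Im[measurable]: "I \<in> sets lebesgue" by (simp add: I_def)
  have RRm: "{-R<..<R} \<in> sets lebesgue" by simp
  have Dnm[measurable]: "Dn \<in> sets lebesgue" by (rule Dn(1))
  have measI: "measure lebesgue I = 2 * r" using r
    by (simp add: I_def measure_completion measure_lborel_Ioo)
  have iI: "integrable lebesgue (indicator I :: real \<Rightarrow> real)"
    using r by (intro integrable_real_indicator) (auto simp: I_def emeasure_completion)
  have iRR: "integrable lebesgue (indicator {-R<..<R} :: real \<Rightarrow> real)"
    using R by (intro integrable_real_indicator) (auto simp: emeasure_completion)
  have hm: "(\<lambda>x. indicator {-R<..<R} x * h x) \<in> borel_measurable lebesgue"
    unfolding h_def by (rule cont_meas_leb) (auto intro: hfun_cont)
  have h2m: "(\<lambda>x. indicator {-R<..<R} x * (h x)\<^sup>2) \<in> borel_measurable lebesgue"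
    unfolding h_def by (rule cont_meas_leb) (auto intro!: continuous_intros hfun_cont)
  have hb: "\<And>x. x \<in> Dn \<Longrightarrow> 0 \<le> h x \<and> h x \<le> 2 * k"
    using hfun_bd[OF _ k \<alpha>1] Dn(2) by (auto simp: h_def subset_eq abs_less_iff)
  have f2i: "integrable lebesgue (\<lambda>x. indicator Dn x * (\<phi> x)\<^sup>2)"
  proof (rule Bochner_Integration.integrable_bound[OF integrable_mult_right[OF iRR, of "M * M"]])
    have "(\<lambda>x. indicator Dn x * (\<phi> x)\<^sup>2) = (\<lambda>x. (indicator Dn x * \<phi> x)\<^sup>2)"
      by (auto simp: fun_eq_iff indicator_def)
    then show "(\<lambda>x. indicator Dn x * (\<phi> x)\<^sup>2) \<in> borel_measurable lebesgue" using \<phi>m by simp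
    show "AE x in lebesgue. norm (indicator Dn x * (\<phi> x)\<^sup>2) \<le> norm (M * M * indicator {-R<..<R} x)"
    proof (intro AE_I2)
      fix x show "norm (indicator Dn x * (\<phi> x)\<^sup>2) \<le> norm (M * M * indicator {-R<..<R} x)"
      proof (cases "x \<in> Dn")
        case True
        then have "0 \<le> \<phi> x" "\<phi> x \<le> M" "x \<in> {-R<..<R}" using \<phi>b Dn(2) by auto
        then show ?thesis using True by (simp add: power2_eq_square mult_mono)
      qed simp
    qed
  qed
  have f2ri: "integrable lebesgue (\<lambda>x. indicator (Dn \<inter> I) x * (\<phi> x)\<^sup>2)"
  proof -
    have "(\<lambda>x. indicator (Dn \<inter> I) x * (\<phi> x)\<^sup>2) = (\<lambda>x. indicator I x * (indicator Dn x * (\<phi> x)\<^sup>2))"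
      by (auto simp: fun_eq_iff indicator_def)
    moreover have "integrable lebesgue (\<lambda>x. indicator I x * (indicator Dn x * (\<phi> x)\<^sup>2))"
    proof (rule Bochner_Integration.integrable_bound[OF f2i])
      have "(\<lambda>x. indicator Dn x * (\<phi> x)\<^sup>2) \<in> borel_measurable lebesgue"
        by (rule borel_measurable_integrable[OF f2i])
      then show "(\<lambda>x. indicator I x * (indicator Dn x * (\<phi> x)\<^sup>2)) \<in> borel_measurable lebesgue"
        by measurable
    qed (auto simp: indicator_def)
    ultimately show ?thesis by simp
  qed
  have iDI: "integrable lebesgue (indicator (Dn \<inter> I) :: real \<Rightarrow> real)"
    by (rule Bochner_Integration.integrable_bound[OF iI]) (auto simp: indicator_def)
  have intDI: "(\<integral>x. indicator (Dn \<inter> I) x \<partial>lebesgue) \<le> 2 * r"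
  proof -
    have "(\<integral>x. indicator (Dn \<inter> I) x \<partial>lebesgue) \<le> (\<integral>x. indicator I x \<partial>lebesgue :: real)"
      by (rule Bochner_Integration.integral_mono[OF iDI iI]) (auto simp: indicator_def)
    also have "\<dots> = measure lebesgue I" using iI by (simp add: integrable_indicator_iff)
    finally show ?thesis using measI by simp
  qed
  have hhi: "integrable lebesgue (\<lambda>x. indicator Dn x * (h x)\<^sup>2)"
  proof -
    have "(\<lambda>x. indicator Dn x * (h x)\<^sup>2) = (\<lambda>x. indicator Dn x * (indicator {-R<..<R} x * (h x)\<^sup>2))"
      using Dn(2) by (auto simp: fun_eq_iff indicator_def subset_eq)
    moreover have "integrable lebesgue (\<lambda>x. indicator Dn x * (indicator {-R<..<R} x * (h x)\<^sup>2))"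
    proof (rule Bochner_Integration.integrable_bound[OF hfun_sq_int(1)[OF k \<alpha> R]])
      show "(\<lambda>x. indicator Dn x * (indicator {-R<..<R} x * (h x)\<^sup>2)) \<in> borel_measurable lebesgue"
        using h2m by measurable
    qed (auto simp: indicator_def h_def)
    ultimately show ?thesis by simp
  qed
  have hhb: "(\<integral>x. indicator Dn x * (h x)\<^sup>2 \<partial>lebesgue) \<le> 4 * k\<^sup>2 / (2 * \<alpha> - 3)"
  proof -
    have "(\<integral>x. indicator Dn x * (h x)\<^sup>2 \<partial>lebesgue) \<le> (\<integral>x. indicator {-R<..<R} x * (h x)\<^sup>2 \<partial>lebesgue)"
      by (rule Bochner_Integration.integral_mono[OF hhi]) (use hfun_sq_int(1)[OF k \<alpha> R] Dn(2) in \<open>auto simp: h_def indicator_def subset_eq\<close>)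
    then show ?thesis using hfun_sq_int(2)[OF k \<alpha> R] by (simp add: h_def)
  qed
  have lhsm: "(\<lambda>x. indicator Dn x * (h x * \<phi> x)) \<in> borel_measurable lebesgue"
  proof -
    have "(\<lambda>x. indicator Dn x * (h x * \<phi> x)) = (\<lambda>x. (indicator {-R<..<R} x * h x) * (indicator Dn x * \<phi> x))"
      using Dn(2) by (auto simp: fun_eq_iff indicator_def subset_eq)
    then show ?thesis using hm \<phi>m by simp
  qed
  have lhsi: "integrable lebesgue (\<lambda>x. indicator Dn x * (h x * \<phi> x))"
  proof (rule Bochner_Integration.integrable_bound[OF integrable_mult_right[OF iRR, of "2 * k * M"] lhsm])
    show "AE x in lebesgue. norm (indicator Dn x * (h x * \<phi> x)) \<le> norm (2 * k * M * indicator {-R<..<R} x)"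
    proof (intro AE_I2)
      fix x show "norm (indicator Dn x * (h x * \<phi> x)) \<le> norm (2 * k * M * indicator {-R<..<R} x)"
      proof (cases "x \<in> Dn")
        case True
        then have "0 \<le> \<phi> x" "\<phi> x \<le> M" "x \<in> {-R<..<R}" "0 \<le> h x" "h x \<le> 2 * k" using \<phi>b Dn(2) hb by auto
        then show ?thesis using True k M by (simp add: abs_mult mult_mono)
      qed simp
    qed
  qed
  define rhs where "rhs x = (2 * k * P * M) * indicator (Dn \<inter> I) x
      + (t / 2) * (indicator Dn x * (\<phi> x)\<^sup>2 - indicator (Dn \<inter> I) x * (\<phi> x)\<^sup>2)
      + (1 / (2 * t)) * (indicator Dn x * (h x)\<^sup>2)" for x
  have rhsi: "integrable lebesgue rhs"
    unfolding rhs_def[abs_def] using iDI f2i f2ri hhi by simp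
  have pw: "indicator Dn x * (h x * \<phi> x) \<le> rhs x" for x
  proof (cases "x \<in> Dn")
    case False
    then show ?thesis by (simp add: rhs_def)
  next
    case True
    have \<phi>x: "0 \<le> \<phi> x" "\<phi> x \<le> M" and hx: "0 \<le> h x" using \<phi>b hb True by auto
    have hh0: "0 \<le> (1 / (2 * t)) * (h x)\<^sup>2" using t by simp
    show ?thesis
    proof (cases "x \<in> I")
      case True2: True
      have "\<bar>x\<bar> < r" using True2 by (auto simp: I_def)
      then have "h x \<le> 2 * k * P"
        unfolding h_def P_def using hfun_bd_inner[of x r R k \<alpha>] r k \<alpha>1 by simp
      then have "h x * \<phi> x \<le> (2 * k * P) * M"
        using \<phi>x hx k P0 by (intro mult_mono) auto
      then show ?thesis using True True2 hh0 by (simp add: rhs_def algebra_simps)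
    next
      case False2: False
      have "h x * \<phi> x = \<phi> x * h x" by simp
      also have "\<dots> \<le> (t * (\<phi> x)\<^sup>2 + (h x)\<^sup>2 / t) / 2" by (rule amgm2[OF t])
      finally show ?thesis using True False2 k P0 M
        by (simp add: rhs_def field_simps)
    qed
  qed
  have "(LINT x:Dn|lebesgue. hfun k \<alpha> R x * \<phi> x) = (\<integral>x. indicator Dn x * (h x * \<phi> x) \<partial>lebesgue)"
    by (simp add: set_lebesgue_integral_def h_def)
  also have "\<dots> \<le> (\<integral>x. rhs x \<partial>lebesgue)" by (rule Bochner_Integration.integral_mono[OF lhsi rhsi pw])
  also have "\<dots> = (2 * k * P * M) * (\<integral>x. indicator (Dn \<inter> I) x \<partial>lebesgue)
      + (t / 2) * ((\<integral>x. indicator Dn x * (\<phi> x)\<^sup>2 \<partial>lebesgue) - (\<integral>x. indicator (Dn \<inter> I) x * (\<phi> x)\<^sup>2 \<partial>lebesgue))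
      + (1 / (2 * t)) * (\<integral>x. indicator Dn x * (h x)\<^sup>2 \<partial>lebesgue)"
    unfolding rhs_def[abs_def] using iDI f2i f2ri hhi by simp
  also have "\<dots> \<le> (2 * k * P * M) * (2 * r)
      + (t / 2) * ((\<integral>x. indicator Dn x * (\<phi> x)\<^sup>2 \<partial>lebesgue) - (\<integral>x. indicator (Dn \<inter> I) x * (\<phi> x)\<^sup>2 \<partial>lebesgue))
      + (1 / (2 * t)) * (4 * k\<^sup>2 / (2 * \<alpha> - 3))"
    using intDI hhb k P0 M t
    by (intro add_mono order_refl mult_left_mono) auto
  also have "\<dots> = 4 * k * M * r * (1 + (R - r)) powr (1 - \<alpha>)
        + (t * ((LINT x:Dn|lebesgue. (\<phi> x)\<^sup>2) - (LINT x:Dn \<inter> {-r<..<r}|lebesgue. (\<phi> x)\<^sup>2)) + (4 * k\<^sup>2 / (2 * \<alpha> - 3)) / t) / 2"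
    using t by (simp add: set_lebesgue_integral_def P_def I_def field_simps)
  finally show ?thesis .
qed


lemma interval_repr:
  fixes D :: "real set"
  assumes o: "open D" and i: "is_interval D" and b: "bounded D" and ne: "D \<noteq> {}"
  shows "Inf D < Sup D" "D = {Inf D<..<Sup D}"
proof -
  have ba: "bdd_above D" and bb: "bdd_below D"
    using b by (auto intro: bounded_imp_bdd_above bounded_imp_bdd_below)
  have inner: "Inf D < x \<and> x < Sup D" if x: "x \<in> D" for x
  proof -
    obtain e where e: "e > 0" "ball x e \<subseteq> D" using o x by (auto simp: open_contains_ball)
    have "x - e/2 \<in> D" "x + e/2 \<in> D" using e by (auto simp: dist_real_def subset_eq)
    then have "Inf D \<le> x - e/2" "x + e/2 \<le> Sup D"
      using ba bb by (auto intro: cInf_lower cSup_upper)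
    then show ?thesis using e by auto
  qed
  obtain x where x: "x \<in> D" using ne by auto
  show "Inf D < Sup D" using inner[OF x] by auto
  show "D = {Inf D<..<Sup D}"
  proof
    show "D \<subseteq> {Inf D<..<Sup D}" using inner by auto
    show "{Inf D<..<Sup D} \<subseteq> D"
    proof
      fix z assume z: "z \<in> {Inf D<..<Sup D}"
      obtain p where p: "p \<in> D" "p < z" using z cInf_less_iff[OF ne bb] by auto
      obtain q where q: "q \<in> D" "z < q" using z less_cSup_iff[OF ne ba] by auto
      show "z \<in> D" using i p q unfolding is_interval_1 by (meson less_imp_le)
    qed
  qed
qed

lemma open_sets_lebesgue: "open (S :: real set) \<Longrightarrow> S \<in> sets lebesgue"
  by simp

theorem lemma3p5:
  fixes \<Omega> :: "real set" and a :: "real \<Rightarrow> real" and K :: "real \<Rightarrow> real \<Rightarrow> real"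
    and C \<alpha> :: real
  assumes dom: "open \<Omega>" "is_interval \<Omega>" "\<Omega> \<noteq> {}" "\<not> bounded \<Omega>"
    and a_cont: "continuous_on (closure \<Omega>) a" and a_bdd: "bounded (a ` \<Omega>)"
    and K_meas: "\<And>x. x \<in> \<Omega> \<Longrightarrow> set_borel_measurable lebesgue \<Omega> (K x)"
    and K_uc: "AE y in lebesgue. y \<in> \<Omega> \<longrightarrow> uniformly_continuous_on \<Omega> (\<lambda>x. K x y)"
    and K_sym: "\<And>x y. x \<in> \<Omega> \<Longrightarrow> y \<in> \<Omega> \<Longrightarrow> K x y = K y x"
    and C_pos: "C > 0" and \<alpha>_gt: "\<alpha> > 3/2"
    and K_bd: "\<And>x y. x \<in> \<Omega> \<Longrightarrow> y \<in> \<Omega> \<Longrightarrow> 0 \<le> K x y \<and> K x y \<le> C * (1 + \<bar>x - y\<bar>) powr (-\<alpha>)"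
  shows "lambda_p K \<Omega> a \<le> liminf (\<lambda>n::nat. lambda_v K (\<Omega> \<inter> {- real n<..<real n}) a)
       \<and> liminf (\<lambda>n::nat. lambda_v K (\<Omega> \<inter> {- real n<..<real n}) a) \<le> lambda_p' K \<Omega> a"
proof -
  define \<Omega>n where "\<Omega>n n = \<Omega> \<inter> {- real n<..<real n}" for n :: nat
  have \<alpha>1: "\<alpha> > 1" using \<alpha>_gt by simp
  obtain N where N: "N \<in> null_sets lebesgue"
    and Ncont: "\<And>y. y \<in> \<Omega> \<Longrightarrow> y \<notin> N \<Longrightarrow> continuous_on \<Omega> (\<lambda>x. K x y)"
  proof -
    from K_uc obtain N where N: "{y \<in> space lebesgue. \<not> (y \<in> \<Omega> \<longrightarrow> uniformly_continuous_on \<Omega> (\<lambda>x. K x y))} \<subseteq> N"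
      "emeasure lebesgue N = 0" "N \<in> sets lebesgue"
      by (rule AE_E)
    show ?thesis
    proof (rule that[of N])
      show "N \<in> null_sets lebesgue" using N by auto
      fix y assume "y \<in> \<Omega>" "y \<notin> N"
      then show "continuous_on \<Omega> (\<lambda>x. K x y)"
        using N(1) by (auto intro: uniformly_continuous_imp_continuous)
    qed
  qed
  have KbC: "0 \<le> K x y \<and> K x y \<le> C" if "x \<in> \<Omega>" "y \<in> \<Omega>" for x y
  proof -
    have "(1 + \<bar>x - y\<bar>) powr (-\<alpha>) \<le> 1" using \<alpha>1 by (intro powr_le1) auto
    then have "C * (1 + \<bar>x - y\<bar>) powr (-\<alpha>) \<le> C" using C_pos by (simp add: mult_left_le)
    then show ?thesis using K_bd[OF that] by auto
  qed
  obtain A where A: "\<And>x. x \<in> \<Omega> \<Longrightarrow> \<bar>a x\<bar> \<le> A"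
    using a_bdd by (auto simp: bounded_iff)
  have \<Omega>n_sub: "\<Omega>n n \<subseteq> \<Omega>" for n by (auto simp: \<Omega>n_def)
  have \<Omega>n_open: "open (\<Omega>n n)" for n using dom(1) by (auto simp: \<Omega>n_def)
  have \<Omega>n_kern: "\<exists>c d. c < d \<and> \<Omega>n n = {c<..<d} \<and> kern K \<Omega> c d C N" if ne: "\<Omega>n n \<noteq> {}" for n
  proof -
    have i: "is_interval (\<Omega>n n)" unfolding \<Omega>n_def
      by (rule is_interval_Int[OF dom(2)]) (auto simp: is_interval_1)
    have b: "bounded (\<Omega>n n)" unfolding \<Omega>n_def by (intro bounded_Int) auto
    define c where "c = Inf (\<Omega>n n)"
    define d where "d = Sup (\<Omega>n n)"
    have cd: "c < d" "\<Omega>n n = {c<..<d}"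
      using interval_repr[OF \<Omega>n_open i b ne] by (auto simp: c_def d_def)
    have "kern K \<Omega> c d C N"
    proof
      show "c < d" by fact
      show "{c<..<d} \<subseteq> \<Omega>" using cd \<Omega>n_sub by auto
      show "open \<Omega>" by (rule dom(1))
      show "N \<in> null_sets lebesgue" by (rule N)
      show "\<And>y. y \<in> \<Omega> \<Longrightarrow> y \<notin> N \<Longrightarrow> continuous_on \<Omega> (\<lambda>x. K x y)" by (rule Ncont)
      show "\<And>x. x \<in> \<Omega> \<Longrightarrow> set_borel_measurable lebesgue \<Omega> (K x)" by (rule K_meas)
      show "\<And>x y. x \<in> \<Omega> \<Longrightarrow> y \<in> \<Omega> \<Longrightarrow> K x y = K y x" by (rule K_sym)
      show "\<And>x y. x \<in> \<Omega> \<Longrightarrow> y \<in> \<Omega> \<Longrightarrow> 0 \<le> K x y \<and> K x y \<le> C" by (rule KbC)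
    qed
    then show ?thesis using cd by blast
  qed
  have part1: "lambda_p K \<Omega> a \<le> liminf (\<lambda>n::nat. lambda_v K (\<Omega>n n) a)"
    unfolding lambda_p_def
  proof (rule Sup_least)
    fix z assume "z \<in> {ereal l | l. \<exists>\<phi>.
      continuous_on (closure \<Omega>) \<phi> \<and> (\<forall>x\<in>closure \<Omega>. \<phi> x > 0) \<and>
      (\<forall>x\<in>\<Omega>. set_integrable lebesgue \<Omega> (\<lambda>y. K x y * \<phi> y)) \<and>
      (\<forall>x\<in>\<Omega>. nlop K \<Omega> \<phi> x + a x * \<phi> x + l * \<phi> x \<le> 0)}"
    then obtain l \<phi> where z: "z = ereal l" and \<phi>c: "continuous_on (closure \<Omega>) \<phi>"
      and \<phi>p: "\<forall>x\<in>closure \<Omega>. \<phi> x > 0"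
      and \<phi>i: "\<forall>x\<in>\<Omega>. set_integrable lebesgue \<Omega> (\<lambda>y. K x y * \<phi> y)"
      and \<phi>ineq: "\<forall>x\<in>\<Omega>. nlop K \<Omega> \<phi> x + a x * \<phi> x + l * \<phi> x \<le> 0"
      by blast
    have "ereal l \<le> lambda_v K (\<Omega>n n) a" for n
      unfolding lambda_v_def
    proof (rule Inf_greatest)
      fix w assume "w \<in> {ereal (- (LINT x:\<Omega>n n|lebesgue. (nlop K (\<Omega>n n) \<psi> x + a x * \<psi> x) * \<psi> x)
                                 / (LINT x:\<Omega>n n|lebesgue. (\<psi> x)\<^sup>2)) | \<psi>.
        set_borel_measurable lebesgue (\<Omega>n n) \<psi> \<and> set_integrable lebesgue (\<Omega>n n) (\<lambda>x. (\<psi> x)\<^sup>2) \<and>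
        (LINT x:\<Omega>n n|lebesgue. (\<psi> x)\<^sup>2) \<noteq> 0}"
      then obtain \<psi> where w: "w = ereal (- (LINT x:\<Omega>n n|lebesgue. (nlop K (\<Omega>n n) \<psi> x + a x * \<psi> x) * \<psi> x)
                                 / (LINT x:\<Omega>n n|lebesgue. (\<psi> x)\<^sup>2))"
        and \<psi>m: "set_borel_measurable lebesgue (\<Omega>n n) \<psi>"
        and \<psi>2: "set_integrable lebesgue (\<Omega>n n) (\<lambda>x. (\<psi> x)\<^sup>2)"
        and \<psi>0: "(LINT x:\<Omega>n n|lebesgue. (\<psi> x)\<^sup>2) \<noteq> 0"
        by blast
      have ne: "\<Omega>n n \<noteq> {}"
      proof
        assume "\<Omega>n n = {}"
        then show False using \<psi>0 by (simp add: set_lebesgue_integral_def)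
      qed
      obtain c d where cd: "c < d" "\<Omega>n n = {c<..<d}" and kk: "kern K \<Omega> c d C N"
        using \<Omega>n_kern[OF ne] by blast
      interpret kk: kern K \<Omega> c d C N by (rule kk)
      have DD: "kk.D = \<Omega>n n" using cd by (simp add: kk.D_def)
      have cl: "{c..d} \<subseteq> closure \<Omega>"
      proof -
        have "closure {c<..<d} \<subseteq> closure \<Omega>" using cd \<Omega>n_sub by (intro closure_mono) auto
        then show ?thesis using cd by simp
      qed
      have "l \<le> - (LINT x:kk.D|lebesgue. (nlop K kk.D \<psi> x + a x * \<psi> x) * \<psi> x) / (LINT x:kk.D|lebesgue. (\<psi> x)\<^sup>2)"
      proof (rule kk.part1_core[where A = A])
        show "\<And>x. x \<in> {c..d} \<Longrightarrow> \<phi> x > 0" using \<phi>p cl by auto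
        show "continuous_on {c..d} \<phi>" using continuous_on_subset[OF \<phi>c cl] .
        show "\<And>y. y \<in> \<Omega> \<Longrightarrow> 0 \<le> \<phi> y" using \<phi>p closure_subset by (auto intro: less_imp_le)
        show "\<And>x. x \<in> kk.D \<Longrightarrow> set_integrable lebesgue \<Omega> (\<lambda>y. K x y * \<phi> y)"
          using \<phi>i DD \<Omega>n_sub by auto
        show "\<And>x. x \<in> kk.D \<Longrightarrow> nlop K \<Omega> \<phi> x + a x * \<phi> x + l * \<phi> x \<le> 0"
          using \<phi>ineq DD \<Omega>n_sub by auto
        show "continuous_on kk.D a"
          using continuous_on_subset[OF a_cont] DD \<Omega>n_sub closure_subset by (metis order_trans)
        show "\<And>x. x \<in> kk.D \<Longrightarrow> \<bar>a x\<bar> \<le> A" using A DD \<Omega>n_sub by auto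
        show "set_borel_measurable lebesgue kk.D \<psi>" using \<psi>m DD by simp
        show "set_integrable lebesgue kk.D (\<lambda>x. (\<psi> x)\<^sup>2)" using \<psi>2 DD by simp
        show "(LINT x:kk.D|lebesgue. (\<psi> x)\<^sup>2) \<noteq> 0" using \<psi>0 DD by simp
      qed
      then show "ereal l \<le> w" using w DD by simp
    qed
    then show "z \<le> liminf (\<lambda>n::nat. lambda_v K (\<Omega>n n) a)"
      unfolding z by (intro Liminf_bounded) auto
  qed
  have part2: "liminf (\<lambda>n::nat. lambda_v K (\<Omega>n n) a) \<le> lambda_p' K \<Omega> a"
    unfolding lambda_p'_def
  proof (rule Inf_greatest)
    fix z assume "z \<in> {ereal l | l. \<exists>\<phi>.
      continuous_on \<Omega> \<phi> \<and> bounded (\<phi> ` \<Omega>) \<and> (\<forall>x\<in>\<Omega>. \<phi> x \<ge> 0) \<and> (\<exists>x\<in>\<Omega>. \<phi> x \<noteq> 0) \<and>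
      (\<forall>x\<in>\<Omega>. nlop K \<Omega> \<phi> x + (a x + l) * \<phi> x \<ge> 0)}"
    then obtain l \<phi> where z: "z = ereal l" and \<phi>c: "continuous_on \<Omega> \<phi>" and \<phi>b: "bounded (\<phi> ` \<Omega>)"
      and \<phi>0: "\<forall>x\<in>\<Omega>. \<phi> x \<ge> 0" and \<phi>ne: "\<exists>x\<in>\<Omega>. \<phi> x \<noteq> 0"
      and \<phi>ineq: "\<forall>x\<in>\<Omega>. nlop K \<Omega> \<phi> x + (a x + l) * \<phi> x \<ge> 0"
      by blast
    obtain M0 where M0: "\<And>x. x \<in> \<Omega> \<Longrightarrow> \<bar>\<phi> x\<bar> \<le> M0" using \<phi>b by (auto simp: bounded_iff)
    define M where "M = max 1 M0"
    have M1: "1 \<le> M" by (simp add: M_def)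
    have \<phi>M: "\<And>x. x \<in> \<Omega> \<Longrightarrow> \<phi> x \<le> M" using M0 by (force simp: M_def)
    obtain x0 where x0: "x0 \<in> \<Omega>" "\<phi> x0 > 0" using \<phi>ne \<phi>0 by (auto simp: less_le)
    define k where "k = M * C / (\<alpha> - 1)"
    have k0: "0 \<le> k" using M1 C_pos \<alpha>1 by (simp add: k_def)
    define W where "W = 4 * k\<^sup>2 / (2 * \<alpha> - 3)"
    have W0: "0 \<le> W" using \<alpha>_gt by (simp add: W_def)
    define S where "S n = (LINT x:\<Omega>n n|lebesgue. (\<phi> x)\<^sup>2)" for n
    define E where "E n = (LINT x:\<Omega>n n|lebesgue. hfun k \<alpha> (real n) x * \<phi> x)" for n
    have \<Omega>n_leb: "\<Omega>n n \<in> sets lebesgue" for n using \<Omega>n_open[of n] by simp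
    have \<phi>m_n: "(\<lambda>x. indicator (\<Omega>n n) x * \<phi> x) \<in> borel_measurable lebesgue" for n
      by (rule cont_meas_leb) (use \<Omega>n_open[of n] continuous_on_subset[OF \<phi>c \<Omega>n_sub[of n]] in auto)
    have \<phi>m: "set_borel_measurable lebesgue \<Omega> \<phi>"
      unfolding set_borel_measurable_def using cont_meas_leb[OF _ \<phi>c] dom(1) by simp
    have S2i: "integrable lebesgue (\<lambda>x. indicator (\<Omega>n n) x * (\<phi> x)\<^sup>2)" for n
    proof (rule Bochner_Integration.integrable_bound)
      show "integrable lebesgue (\<lambda>x. (M * M) * indicator {- real n<..<real n} x)"
        by (intro integrable_mult_right integrable_real_indicator) (auto simp: emeasure_completion)
      have "(\<lambda>x. indicator (\<Omega>n n) x * (\<phi> x)\<^sup>2) = (\<lambda>x. (indicator (\<Omega>n n) x * \<phi> x)\<^sup>2)"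
        by (auto simp: fun_eq_iff indicator_def)
      then show "(\<lambda>x. indicator (\<Omega>n n) x * (\<phi> x)\<^sup>2) \<in> borel_measurable lebesgue" using \<phi>m_n[of n] by simp
      show "AE x in lebesgue. norm (indicator (\<Omega>n n) x * (\<phi> x)\<^sup>2) \<le> norm ((M * M) * indicator {- real n<..<real n} x)"
      proof (intro AE_I2)
        fix x show "norm (indicator (\<Omega>n n) x * (\<phi> x)\<^sup>2) \<le> norm ((M * M) * indicator {- real n<..<real n} x)"
        proof (cases "x \<in> \<Omega>n n")
          case True
          then have "0 \<le> \<phi> x" "\<phi> x \<le> M" "x \<in> {- real n<..<real n}" using \<phi>0 \<phi>M \<Omega>n_sub by (auto simp: \<Omega>n_def)
          then show ?thesis using True by (simp add: power2_eq_square mult_mono)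
        qed simp
      qed
    qed
    have Smono: "S r \<le> S n" if "r \<le> n" for r n
      unfolding S_def set_lebesgue_integral_def
      by (rule Bochner_Integration.integral_mono) (use S2i that in \<open>auto simp: indicator_def \<Omega>n_def\<close>)
    have S0: "0 \<le> S n" for n unfolding S_def set_lebesgue_integral_def by (intro integral_nonneg_AE) auto
    obtain n1 :: nat where n1: "0 < n1" "S n1 > 0"
    proof -
      obtain \<delta> where \<delta>: "\<delta> > 0" "\<And>y. dist y x0 < \<delta> \<Longrightarrow> y \<in> \<Omega> \<and> \<phi> x0 / 2 < \<phi> y"
      proof -
        obtain e1 where e1: "e1 > 0" "ball x0 e1 \<subseteq> \<Omega>" using dom(1) x0(1) by (auto simp: open_contains_ball)
        have "isCont \<phi> x0" using \<phi>c dom(1) x0(1) by (simp add: continuous_on_eq_continuous_at)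
        then obtain e2 where e2: "e2 > 0" "\<And>y. dist y x0 < e2 \<Longrightarrow> dist (\<phi> y) (\<phi> x0) < \<phi> x0 / 2"
          using x0(2) unfolding continuous_at_eps_delta by (metis half_gt_zero)
        show ?thesis
        proof (rule that[of "min e1 e2"])
          show "min e1 e2 > 0" using e1 e2 by simp
          fix y assume "dist y x0 < min e1 e2"
          then have d1: "dist y x0 < e1" and d2: "dist y x0 < e2" by auto
          have "y \<in> ball x0 e1" using d1 by (simp add: dist_commute)
          moreover have "dist (\<phi> y) (\<phi> x0) < \<phi> x0 / 2" using e2(2)[OF d2] .
          ultimately have "y \<in> ball x0 e1" "dist (\<phi> y) (\<phi> x0) < \<phi> x0 / 2" by auto
          then have yO: "y \<in> \<Omega>" and dd: "\<bar>\<phi> y - \<phi> x0\<bar> < \<phi> x0 / 2" using e1 by (auto simp: dist_real_def)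
          have "\<phi> x0 - \<phi> y \<le> \<bar>\<phi> y - \<phi> x0\<bar>" by simp
          then show "y \<in> \<Omega> \<and> \<phi> x0 / 2 < \<phi> y" using yO dd by linarith
        qed
      qed
      define n1 where "n1 = nat \<lceil>\<bar>x0\<bar> + \<delta>\<rceil> + 1"
      have n1r: "\<bar>x0\<bar> + \<delta> < real n1" unfolding n1_def by linarith
      define B where "B = {x0 - \<delta><..<x0 + \<delta>}"
      have Bsub: "B \<subseteq> \<Omega>n n1"
      proof
        fix y assume "y \<in> B"
        then have "dist y x0 < \<delta>" "\<bar>y\<bar> < real n1" using n1r by (auto simp: B_def dist_real_def)
        then show "y \<in> \<Omega>n n1" using \<delta>(2) by (auto simp: \<Omega>n_def)
      qed
      have Bi: "integrable lebesgue (\<lambda>x. ((\<phi> x0 / 2)\<^sup>2) * indicator B x)"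
        using \<delta> by (intro integrable_mult_right integrable_real_indicator) (auto simp: B_def emeasure_completion)
      have "0 < ((\<phi> x0 / 2)\<^sup>2) * (2 * \<delta>)" using x0 \<delta> by simp
      also have "((\<phi> x0 / 2)\<^sup>2) * (2 * \<delta>) = (\<integral>x. ((\<phi> x0 / 2)\<^sup>2) * indicator B x \<partial>lebesgue)"
        using \<delta> by (simp add: B_def measure_completion measure_lborel_Ioo)
      also have "\<dots> \<le> S n1"
        unfolding S_def set_lebesgue_integral_def
      proof (rule Bochner_Integration.integral_mono[OF Bi])
        show "integrable lebesgue (\<lambda>x. indicator (\<Omega>n n1) x *\<^sub>R (\<phi> x)\<^sup>2)" using S2i[of n1] by simp
        fix x show "(\<phi> x0 / 2)\<^sup>2 * indicator B x \<le> indicator (\<Omega>n n1) x *\<^sub>R (\<phi> x)\<^sup>2"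
        proof (cases "x \<in> B")
          case True
          then have "dist x x0 < \<delta>" by (auto simp: B_def dist_real_def)
          then have "\<phi> x0 / 2 < \<phi> x" using \<delta>(2) by auto
          then have "(\<phi> x0 / 2)\<^sup>2 \<le> (\<phi> x)\<^sup>2" using x0(2) by (intro power_mono) auto
          then show ?thesis using True Bsub by auto
        qed simp
      qed
      finally show ?thesis using that[of n1] by (simp add: n1_def)
    qed
    have Ebd: "E n \<le> (4 * k * M) * real r * (1 + (real n - real r)) powr (1 - \<alpha>) + (t * (S n - S r) + W / t) / 2"
      if rn: "r \<le> n" and nn: "n1 \<le> n" and t: "t > 0" for r n t
    proof -
      have npos: "0 < real n" using n1 nn by simp
      have eq: "\<Omega>n n \<inter> {- real r<..<real r} = \<Omega>n r" using rn by (auto simp: \<Omega>n_def)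
      have "E n \<le> 4 * k * M * real r * (1 + (real n - real r)) powr (1 - \<alpha>)
        + (t * ((LINT x:\<Omega>n n|lebesgue. (\<phi> x)\<^sup>2) - (LINT x:\<Omega>n n \<inter> {-real r<..<real r}|lebesgue. (\<phi> x)\<^sup>2)) + (4 * k\<^sup>2 / (2 * \<alpha> - 3)) / t) / 2"
        unfolding E_def
      proof (rule E_bound)
        show "\<Omega>n n \<in> sets lebesgue" by (rule \<Omega>n_leb)
        show "\<Omega>n n \<subseteq> {- real n<..<real n}" by (auto simp: \<Omega>n_def)
        show "(\<lambda>x. indicator (\<Omega>n n) x * \<phi> x) \<in> borel_measurable lebesgue" by (rule \<phi>m_n)
        show "\<And>x. x \<in> \<Omega>n n \<Longrightarrow> 0 \<le> \<phi> x \<and> \<phi> x \<le> M" using \<phi>0 \<phi>M \<Omega>n_sub by auto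
      qed (use k0 M1 \<alpha>_gt npos rn t in auto)
      then show ?thesis using eq by (simp add: S_def W_def)
    qed
    show "liminf (\<lambda>n::nat. lambda_v K (\<Omega>n n) a) \<le> z"
      unfolding z
    proof (rule ereal_le_epsilon2)
      fix \<epsilon> :: real assume \<epsilon>: "0 < \<epsilon>"
      have evE: "eventually (\<lambda>n. E n \<le> \<epsilon> * S n) sequentially"
        by (rule seq_lemma[OF Smono S0 n1(2) W0 \<alpha>1 _ Ebd \<epsilon>]) (use k0 M1 in auto)
      have "eventually (\<lambda>n. lambda_v K (\<Omega>n n) a \<le> ereal l + ereal \<epsilon>) sequentially"
        using evE eventually_ge_at_top[of n1]
      proof eventually_elim
        case (elim n)
        have Sn: "S n > 0" using Smono[OF elim(2)] n1 by simp
        have ne: "\<Omega>n n \<noteq> {}"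
        proof
          assume "\<Omega>n n = {}"
          then show False using Sn by (simp add: S_def set_lebesgue_integral_def)
        qed
        obtain c d where cd: "c < d" "\<Omega>n n = {c<..<d}" and kk: "kern K \<Omega> c d C N"
          using \<Omega>n_kern[OF ne] by blast
        interpret kk: kern K \<Omega> c d C N by (rule kk)
        have DD: "kk.D = \<Omega>n n" using cd by (simp add: kk.D_def)
        have Dn: "\<And>x. x \<in> kk.D \<Longrightarrow> x \<in> \<Omega> \<and> \<bar>x\<bar> < real n" using DD by (auto simp: \<Omega>n_def)
        note core = kk.part2_core[where \<phi> = \<phi> and a = a and h = "hfun k \<alpha> (real n)" and l = l and A = A and M = M and H = "2 * k"]
        have hyps: "continuous_on \<Omega> \<phi>" "\<And>y. y \<in> \<Omega> \<Longrightarrow> 0 \<le> \<phi> y" "\<And>y. y \<in> \<Omega> \<Longrightarrow> \<phi> y \<le> M"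
          "\<And>x. x \<in> kk.D \<Longrightarrow> 0 \<le> nlop K \<Omega> \<phi> x + (a x + l) * \<phi> x"
          "continuous_on kk.D a" "\<And>x. x \<in> kk.D \<Longrightarrow> \<bar>a x\<bar> \<le> A"
          "continuous_on kk.D (hfun k \<alpha> (real n))" "\<And>x. x \<in> kk.D \<Longrightarrow> \<bar>hfun k \<alpha> (real n) x\<bar> \<le> 2 * k"
          "\<And>x. x \<in> kk.D \<Longrightarrow> nlop K \<Omega> \<phi> x - nlop K kk.D \<phi> x \<le> hfun k \<alpha> (real n) x"
          "(LINT x:kk.D|lebesgue. (\<phi> x)\<^sup>2) > 0"
        proof -
          show "continuous_on \<Omega> \<phi>" by (rule \<phi>c)
          show "\<And>y. y \<in> \<Omega> \<Longrightarrow> 0 \<le> \<phi> y" using \<phi>0 by auto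
          show "\<And>y. y \<in> \<Omega> \<Longrightarrow> \<phi> y \<le> M" by (rule \<phi>M)
          show "\<And>x. x \<in> kk.D \<Longrightarrow> 0 \<le> nlop K \<Omega> \<phi> x + (a x + l) * \<phi> x" using \<phi>ineq Dn by auto
          show "continuous_on kk.D a"
            using continuous_on_subset[OF a_cont] DD \<Omega>n_sub closure_subset by (metis order_trans)
          show "\<And>x. x \<in> kk.D \<Longrightarrow> \<bar>a x\<bar> \<le> A" using A Dn by auto
          show "continuous_on kk.D (hfun k \<alpha> (real n))"
          proof (rule continuous_on_subset[OF hfun_cont], rule subsetI)
            fix x assume "x \<in> kk.D"
            then have "\<bar>x\<bar> < real n" using Dn by auto
            then show "x \<in> {- real n<..<real n}" by (auto simp: abs_less_iff)
          qed
          show "\<And>x. x \<in> kk.D \<Longrightarrow> \<bar>hfun k \<alpha> (real n) x\<bar> \<le> 2 * k"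
            using hfun_bd[OF _ k0 \<alpha>1] Dn by (metis abs_of_nonneg)
          show "\<And>x. x \<in> kk.D \<Longrightarrow> nlop K \<Omega> \<phi> x - nlop K kk.D \<phi> x \<le> hfun k \<alpha> (real n) x"
          proof -
            fix x assume "x \<in> kk.D"
            then have x: "x \<in> \<Omega>" "\<bar>x\<bar> < real n" using Dn by auto
            have "nlop K \<Omega> \<phi> x - nlop K (\<Omega> \<inter> {- real n<..<real n}) \<phi> x
              \<le> M * C / (\<alpha> - 1) * ((1 + (real n - x)) powr (1 - \<alpha>) + (1 + (x + real n)) powr (1 - \<alpha>))"
              by (rule nlop_tail(2)[OF K_meas K_bd C_pos \<alpha>1 \<phi>m _ \<phi>M x]) (use \<phi>0 in auto)
            then show "nlop K \<Omega> \<phi> x - nlop K kk.D \<phi> x \<le> hfun k \<alpha> (real n) x"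
              using DD by (simp add: \<Omega>n_def hfun_def k_def)
          qed
          show "(LINT x:kk.D|lebesgue. (\<phi> x)\<^sup>2) > 0" using Sn DD by (simp add: S_def)
        qed
        note c1 = core(1)[OF hyps] and c2 = core(2)[OF hyps] and c3 = core(3)[OF hyps]
        have R: "- (LINT x:\<Omega>n n|lebesgue. (nlop K (\<Omega>n n) \<phi> x + a x * \<phi> x) * \<phi> x) / S n \<le> l + E n / S n"
          using c3 DD by (simp add: S_def E_def)
        have "E n / S n \<le> \<epsilon>" using elim(1) Sn by (simp add: divide_le_eq)
        then have Rle: "- (LINT x:\<Omega>n n|lebesgue. (nlop K (\<Omega>n n) \<phi> x + a x * \<phi> x) * \<phi> x) / S n \<le> l + \<epsilon>"
          using R by linarith
        have "lambda_v K (\<Omega>n n) a \<le> ereal (- (LINT x:\<Omega>n n|lebesgue. (nlop K (\<Omega>n n) \<phi> x + a x * \<phi> x) * \<phi> x)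
                                 / (LINT x:\<Omega>n n|lebesgue. (\<phi> x)\<^sup>2))"
          unfolding lambda_v_def
          by (rule Inf_lower) (use c1 c2 Sn DD in \<open>auto simp: S_def\<close>)
        also have "\<dots> \<le> ereal l + ereal \<epsilon>" using Rle by (simp add: S_def)
        finally show ?case .
      qed
      then show "liminf (\<lambda>n::nat. lambda_v K (\<Omega>n n) a) \<le> ereal l + ereal \<epsilon>"
        by (intro Liminf_le) auto
    qed
  qed
  show ?thesis using part1 part2 by (simp add: \<Omega>n_def)
qed


end
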